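(* Let $\mathcal{M}$ be a connected simplicial $2$-manifold (possibly with boundary) that is not a checkered polygon triangulation. Then $\mathcal{M}$ has a topological unfolding that is not checkered.
   Context: A simplicial $2$-manifold is a finite $2$-dimensional simplicial complex homeomorphic to a $2$-manifold, possibly with boundary; its triangles are called facets. The weak dual $\mathcal{M}^*$ is the graph with a node for each facet and an arc between two facets sharing an edge (for a simplicial complex this is a simple graph). For a spanning tree $T^*$ of $\mathcal{M}^*$, the topological unfolding determined by $T^*$ is the complex obtained from disjoint copies of the facets of $\mathcal{M}$ by gluing two facets along their common edge exactly when they are joined by an arc of $T^*$; it is a triangulated polygon with no interior vertices (a complex homeomorphic to a closed disk with all vertices on the boundary). A polygon triangulation (triangulated polygon with no interior vertices) is checkered if there is a coloring of its triangles black and white such that triangles sharing an edge receive different colors and every white triangle shares an edge with exactly three triangles. *)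

theory Defs
  imports Main
begin

text \<open>A (pure, 2-dimensional) finite simplicial complex is represented by its set of
facets K :: 'v set set, each facet being a 3-element set of vertices.\<close>

definition graph_connected :: "'a set \<Rightarrow> 'a set set \<Rightarrow> bool" where
  "graph_connected V E \<longleftrightarrow>
     (\<forall>x\<in>V. \<forall>y\<in>V. (x, y) \<in> {(a, b). {a, b} \<in> E}\<^sup>*)"

definition is_tree :: "'a set \<Rightarrow> 'a set set \<Rightarrow> bool" where
  "is_tree V E \<longleftrightarrow>
     E \<subseteq> {e. card e = 2 \<and> e \<subseteq> V} \<and> graph_connected V E \<and>
     (\<forall>e\<in>E. \<not> graph_connected V (E - {e}))"

definition cverts :: "'v set set \<Rightarrow> 'v set" where
  "cverts K = \<Union>K"

definition cedges :: "'v set set \<Rightarrow> 'v set set" where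
  "cedges K = {e. card e = 2 \<and> (\<exists>t\<in>K. e \<subseteq> t)}"

definition link_edges :: "'v set set \<Rightarrow> 'v \<Rightarrow> 'v set set" where
  "link_edges K v = {t - {v} | t. t \<in> K \<and> v \<in> t}"

definition link_verts :: "'v set set \<Rightarrow> 'v \<Rightarrow> 'v set" where
  "link_verts K v = \<Union>(link_edges K v)"

text \<open>Combinatorial simplicial 2-manifold (possibly with boundary): finite pure
2-dimensional complex, every edge in at most two triangles, every vertex link connected
(hence a path or a cycle).\<close>
definition simplicial_2_manifold :: "'v set set \<Rightarrow> bool" where
  "simplicial_2_manifold K \<longleftrightarrow>
     finite K \<and> K \<noteq> {} \<and> (\<forall>t\<in>K. card t = 3) \<and>
     (\<forall>e\<in>cedges K. card {t\<in>K. e \<subseteq> t} \<le> 2) \<and>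
     (\<forall>v\<in>cverts K. graph_connected (link_verts K v) (link_edges K v))"

definition complex_connected :: "'v set set \<Rightarrow> bool" where
  "complex_connected K \<longleftrightarrow> graph_connected (cverts K) (cedges K)"

definition boundary_edges :: "'v set set \<Rightarrow> 'v set set" where
  "boundary_edges K = {e\<in>cedges K. card {t\<in>K. e \<subseteq> t} = 1}"

definition euler_char :: "'v set set \<Rightarrow> int" where
  "euler_char K = int (card (cverts K)) - int (card (cedges K)) + int (card K)"

text \<open>Polygon triangulation: triangulated closed disk (connected 2-manifold with
nonempty boundary and Euler characteristic 1) all of whose vertices lie on the boundary.\<close>
definition polygon_triangulation :: "'v set set \<Rightarrow> bool" where
  "polygon_triangulation K \<longleftrightarrow>
     simplicial_2_manifold K \<and> complex_connected K \<and>
     boundary_edges K \<noteq> {} \<and> euler_char K = 1 \<and>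
     cverts K = \<Union>(boundary_edges K)"

definition checkered_coloring :: "'v set set \<Rightarrow> bool" where
  "checkered_coloring K \<longleftrightarrow>
     (\<exists>white :: 'v set \<Rightarrow> bool.
        (\<forall>s\<in>K. \<forall>t\<in>K. s \<noteq> t \<and> card (s \<inter> t) = 2 \<longrightarrow> white s \<noteq> white t) \<and>
        (\<forall>t\<in>K. white t \<longrightarrow> card {s\<in>K. s \<noteq> t \<and> card (s \<inter> t) = 2} = 3))"

definition checkered :: "'v set set \<Rightarrow> bool" where
  "checkered K \<longleftrightarrow> polygon_triangulation K \<and> checkered_coloring K"

definition dual_arcs :: "'v set set \<Rightarrow> 'v set set set" where
  "dual_arcs K = {{s, t} | s t. s \<in> K \<and> t \<in> K \<and> s \<noteq> t \<and> card (s \<inter> t) = 2}"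

definition spanning_tree_dual :: "'v set set \<Rightarrow> 'v set set set \<Rightarrow> bool" where
  "spanning_tree_dual K T \<longleftrightarrow> T \<subseteq> dual_arcs K \<and> is_tree K T"

text \<open>Topological unfolding: take disjoint copies of the facets (corners are pairs
(facet, vertex)) and glue two facets along their common edge exactly when they are
joined by an arc of T; the vertices of the unfolding are the resulting equivalence
classes of corners.\<close>
definition glue :: "'v set set set \<Rightarrow> (('v set \<times> 'v) \<times> ('v set \<times> 'v)) set" where
  "glue T = {((s, v), (t, v)) | s t v. {s, t} \<in> T \<and> v \<in> s \<and> v \<in> t}"

definition unfold_vertex :: "'v set set set \<Rightarrow> 'v set \<Rightarrow> 'v \<Rightarrow> ('v set \<times> 'v) set" where
  "unfold_vertex T t v = {p. ((t, v), p) \<in> (glue T \<union> (glue T)\<inverse>)\<^sup>*}"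

definition topological_unfolding :: "'v set set \<Rightarrow> 'v set set set \<Rightarrow> ('v set \<times> 'v) set set set" where
  "topological_unfolding K T = (\<lambda>t. (\<lambda>v. unfold_vertex T t v) ` t) ` K"

end

theory Submission
  imports Defs
begin

lemma card_dbl: "a \<noteq> b \<Longrightarrow> card {a, b} = 2" by simp

lemma card_dbl_neq: "card {a, b} = 2 \<Longrightarrow> a \<noteq> b" by (cases "a = b") auto

definition Rel :: "'a set set \<Rightarrow> ('a \<times> 'a) set" where
  "Rel E = {(a, b). {a, b} \<in> E}"

lemma graph_connected_Rel: "graph_connected V E \<longleftrightarrow> (\<forall>x\<in>V. \<forall>y\<in>V. (x, y) \<in> (Rel E)\<^sup>*)"
  by (simp add: graph_connected_def Rel_def)

lemma Rel_iff[simp]: "(a, b) \<in> Rel E \<longleftrightarrow> {a, b} \<in> E"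
  by (simp add: Rel_def)

lemma Rel_sym: "(a, b) \<in> Rel E \<Longrightarrow> (b, a) \<in> Rel E"
proof -
  assume "(a, b) \<in> Rel E"
  then have "{a, b} \<in> E" by simp
  moreover have "{b, a} = {a, b}" by (rule insert_commute)
  ultimately show ?thesis by simp
qed

lemma Rel_rtr_sym: "(a, b) \<in> (Rel E)\<^sup>* \<Longrightarrow> (b, a) \<in> (Rel E)\<^sup>*"
proof (induction rule: rtrancl_induct)
  case base then show ?case by simp
next
  case (step y z)
  then show ?case by (meson Rel_sym converse_rtrancl_into_rtrancl)
qed

lemma Rel_mono: "E \<subseteq> F \<Longrightarrow> (a, b) \<in> (Rel E)\<^sup>* \<Longrightarrow> (a, b) \<in> (Rel F)\<^sup>*"
proof -
  assume "E \<subseteq> F" "(a, b) \<in> (Rel E)\<^sup>*"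
  moreover have "Rel E \<subseteq> Rel F" using \<open>E \<subseteq> F\<close> by (auto simp: Rel_def)
  ultimately show ?thesis using rtrancl_mono by blast
qed

lemma closed_rtr:
  assumes "\<And>x y. {x, y} \<in> E \<Longrightarrow> x \<in> X \<longleftrightarrow> y \<in> X"
    and "(u, v) \<in> (Rel E)\<^sup>*" and "u \<in> X"
  shows "v \<in> X"
  using assms(2,3)
proof (induction rule: rtrancl_induct)
  case base then show ?case .
next
  case (step y z) then show ?case using assms(1) by auto
qed

lemma leave_start:
  assumes "(s, t) \<in> R\<^sup>*" "s \<noteq> t"
  shows "\<exists>q. (s, q) \<in> R \<and> (q, t) \<in> {(x, y). (x, y) \<in> R \<and> x \<noteq> s \<and> y \<noteq> s}\<^sup>*"
proof -
  have "t = s \<or> (\<exists>q. (s, q) \<in> R \<and> (q, t) \<in> {(x, y). (x, y) \<in> R \<and> x \<noteq> s \<and> y \<noteq> s}\<^sup>*)"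
    using assms(1)
  proof (induction rule: rtrancl_induct)
    case base then show ?case by simp
  next
    case (step y z)
    show ?case
    proof (cases "z = s")
      case True then show ?thesis by simp
    next
      case False
      show ?thesis
      proof (cases "y = s")
        case True then show ?thesis using step False by auto
      next
        case yns: False
        then obtain q where q: "(s, q) \<in> R" "(q, y) \<in> {(x, y). (x, y) \<in> R \<and> x \<noteq> s \<and> y \<noteq> s}\<^sup>*"
          using step by auto
        have "(q, z) \<in> {(x, y). (x, y) \<in> R \<and> x \<noteq> s \<and> y \<noteq> s}\<^sup>*"
          using q(2) step(2) yns False by (simp add: rtrancl.rtrancl_into_rtrancl)
        then show ?thesis using q(1) by blast
      qed
    qed
  qed
  then show ?thesis using assms(2) by auto
qed

definition nb :: "'a set \<Rightarrow> 'a set set \<Rightarrow> 'a \<Rightarrow> nat" where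
  "nb K E t = card {s\<in>K. {s, t} \<in> E}"

definition tree_col :: "'a set \<Rightarrow> 'a set set \<Rightarrow> bool" where
  "tree_col K T \<longleftrightarrow> (\<exists>col. (\<forall>s\<in>K. \<forall>t\<in>K. {s, t} \<in> T \<longrightarrow> col s \<noteq> col t) \<and>
      (\<forall>t\<in>K. col t \<longrightarrow> nb K T t = 3))"

locale rtree =
  fixes K :: "'a set" and r :: 'a and p :: "'a \<Rightarrow> 'a" and d :: "'a \<Rightarrow> nat"
  assumes r_in: "r \<in> K"
    and p_in: "\<And>v. v \<in> K \<Longrightarrow> v \<noteq> r \<Longrightarrow> p v \<in> K"
    and p_dec: "\<And>v. v \<in> K \<Longrightarrow> v \<noteq> r \<Longrightarrow> d (p v) < d v"
begin

definition PR where "PR = {(v, p v) | v. v \<in> K \<and> v \<noteq> r}"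
definition arcs where "arcs = {{v, p v} | v. v \<in> K \<and> v \<noteq> r}"
definition desc where "desc a = {u\<in>K. (u, a) \<in> PR\<^sup>*}"

lemma PR_iff: "(u, z) \<in> PR \<longleftrightarrow> u \<in> K \<and> u \<noteq> r \<and> z = p u"
  by (auto simp: PR_def)

lemma p_neq: "v \<in> K \<Longrightarrow> v \<noteq> r \<Longrightarrow> p v \<noteq> v"
  using p_dec by fastforce

lemma PR_dec: "(u, v) \<in> PR\<^sup>* \<Longrightarrow> u = v \<or> d v < d u"
proof (induction rule: rtrancl_induct)
  case base then show ?case by simp
next
  case (step y z)
  have "y \<in> K" "y \<noteq> r" "z = p y" using step(2) by (auto simp: PR_iff)
  then have "d z < d y" using p_dec by simp
  then show ?case using step(3) by auto
qed

lemma PR_K: "(u, v) \<in> PR\<^sup>* \<Longrightarrow> u \<in> K \<Longrightarrow> v \<in> K"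
proof (induction rule: rtrancl_induct)
  case base then show ?case by simp
next
  case (step y z) then show ?case using p_in by (auto simp: PR_iff)
qed

lemma to_root: "u \<in> K \<Longrightarrow> (u, r) \<in> PR\<^sup>*"
proof (induction "d u" arbitrary: u rule: less_induct)
  case less
  show ?case
  proof (cases "u = r")
    case True then show ?thesis by simp
  next
    case False
    then have "(p u, r) \<in> PR\<^sup>*" using less p_in p_dec by blast
    moreover have "(u, p u) \<in> PR" using less False by (simp add: PR_iff)
    ultimately show ?thesis by (meson converse_rtrancl_into_rtrancl)
  qed
qed

lemma PR_Rel: "(u, v) \<in> PR\<^sup>* \<Longrightarrow> (u, v) \<in> (Rel arcs)\<^sup>*"
proof (induction rule: rtrancl_induct)
  case base then show ?case by simp
next
  case (step y z)
  then have "(y, z) \<in> Rel arcs" by (auto simp: PR_iff arcs_def)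
  then show ?case using step by (meson rtrancl.rtrancl_into_rtrancl)
qed

lemma arcs_conn: "graph_connected K arcs"
  unfolding graph_connected_Rel
proof (intro ballI)
  fix x y assume "x \<in> K" "y \<in> K"
  then have "(x, r) \<in> (Rel arcs)\<^sup>*" "(y, r) \<in> (Rel arcs)\<^sup>*" using to_root PR_Rel by auto
  then show "(x, y) \<in> (Rel arcs)\<^sup>*" by (meson Rel_rtr_sym rtrancl_trans)
qed

lemma arcs_sub: "arcs \<subseteq> {e. card e = 2 \<and> e \<subseteq> K}"
proof
  fix e assume "e \<in> arcs"
  then obtain v where v: "v \<in> K" "v \<noteq> r" "e = {v, p v}" by (auto simp: arcs_def)
  then have "p v \<noteq> v" "p v \<in> K" using p_neq p_in by auto
  then have "v \<noteq> p v" by metis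
  then have "card {v, p v} = 2" by (rule card_dbl)
  moreover have "{v, p v} \<subseteq> K" using v(1) \<open>p v \<in> K\<close> by blast
  ultimately show "e \<in> {e. card e = 2 \<and> e \<subseteq> K}" using v(3) by blast
qed

lemma arc_eq: "v \<in> K \<Longrightarrow> v \<noteq> r \<Longrightarrow> a \<in> K \<Longrightarrow> a \<noteq> r \<Longrightarrow> {v, p v} = {a, p a} \<Longrightarrow> v = a"
  by (metis doubleton_eq_iff p_dec order_less_asym p_in)

lemma card_arcs: "finite K \<Longrightarrow> card arcs = card K - 1"
proof -
  assume fin: "finite K"
  have "arcs = (\<lambda>v. {v, p v}) ` (K - {r})" by (auto simp: arcs_def)
  moreover have "inj_on (\<lambda>v. {v, p v}) (K - {r})"
    by (auto intro!: inj_onI dest: arc_eq)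
  ultimately have "card arcs = card (K - {r})" by (simp add: card_image)
  then show ?thesis using r_in fin by simp
qed

lemma step_back: "(u, a) \<in> PR\<^sup>* \<Longrightarrow> u \<noteq> a \<Longrightarrow> (p u, a) \<in> PR\<^sup>* \<and> u \<in> K \<and> u \<noteq> r"
  by (erule converse_rtranclE) (auto simp: PR_iff)

lemma desc_self: "a \<in> K \<Longrightarrow> a \<in> desc a" by (simp add: desc_def)

lemma root_notin_desc: "a \<noteq> r \<Longrightarrow> r \<notin> desc a"
  using step_back by (auto simp: desc_def)

lemma desc_closed:
  assumes "v \<in> K" "v \<noteq> r" "v \<noteq> a"
  shows "v \<in> desc a \<longleftrightarrow> p v \<in> desc a"
proof
  assume "v \<in> desc a"
  then show "p v \<in> desc a" using step_back assms p_in by (auto simp: desc_def)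
next
  assume "p v \<in> desc a"
  moreover have "(v, p v) \<in> PR" using assms by (simp add: PR_iff)
  ultimately show "v \<in> desc a" using assms by (auto simp: desc_def intro: converse_rtrancl_into_rtrancl)
qed

lemma in_desc_conn:
  assumes "a \<in> K" "a \<noteq> r"
  shows "u \<in> desc a \<Longrightarrow> (u, a) \<in> (Rel (arcs - {{a, p a}}))\<^sup>*"
proof (induction "d u" arbitrary: u rule: less_induct)
  case less
  show ?case
  proof (cases "u = a")
    case True then show ?thesis by simp
  next
    case False
    then have u: "u \<in> K" "u \<noteq> r" "(p u, a) \<in> PR\<^sup>*" using less step_back by (auto simp: desc_def)
    then have "p u \<in> desc a" using p_in by (auto simp: desc_def)
    moreover have "d (p u) < d u" using u p_dec by auto
    ultimately have IH: "(p u, a) \<in> (Rel (arcs - {{a, p a}}))\<^sup>*" using less.hyps by blast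
    have "{u, p u} \<in> arcs" using u unfolding arcs_def by blast
    moreover have "{u, p u} \<noteq> {a, p a}" using arc_eq[of u a] u False assms by blast
    ultimately have "{u, p u} \<in> arcs - {{a, p a}}" by blast
    then show ?thesis using IH by (meson Rel_iff converse_rtrancl_into_rtrancl)
  qed
qed

lemma out_desc_conn:
  assumes "a \<in> K" "a \<noteq> r"
  shows "u \<in> K \<Longrightarrow> u \<notin> desc a \<Longrightarrow> (u, r) \<in> (Rel (arcs - {{a, p a}}))\<^sup>*"
proof (induction "d u" arbitrary: u rule: less_induct)
  case less
  show ?case
  proof (cases "u = r")
    case True then show ?thesis by simp
  next
    case False
    have ua: "u \<noteq> a" using less desc_self assms by auto
    have "p u \<notin> desc a" using desc_closed[of u a] less(2,3) False ua by blast
    moreover have "d (p u) < d u" "p u \<in> K" using less(2) False p_dec p_in by auto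
    ultimately have IH: "(p u, r) \<in> (Rel (arcs - {{a, p a}}))\<^sup>*" using less.hyps by blast
    have "{u, p u} \<in> arcs" using less(2) False unfolding arcs_def by blast
    moreover have "{u, p u} \<noteq> {a, p a}" using arc_eq[of u a] less(2) False ua assms by blast
    ultimately have "{u, p u} \<in> arcs - {{a, p a}}" by blast
    then show ?thesis using IH by (meson Rel_iff converse_rtrancl_into_rtrancl)
  qed
qed

lemma bridge:
  assumes "a \<in> K" "a \<noteq> r"
  shows "\<not> graph_connected K (arcs - {{a, p a}})"
proof
  assume "graph_connected K (arcs - {{a, p a}})"
  then have "(a, r) \<in> (Rel (arcs - {{a, p a}}))\<^sup>*" using assms r_in by (simp add: graph_connected_Rel)
  moreover have "\<And>x y. {x, y} \<in> arcs - {{a, p a}} \<Longrightarrow> x \<in> desc a \<longleftrightarrow> y \<in> desc a"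
  proof -
    fix x y assume "{x, y} \<in> arcs - {{a, p a}}"
    then have xy: "{x, y} \<in> arcs" "{x, y} \<noteq> {a, p a}" by auto
    then obtain v where v0: "v \<in> K" "v \<noteq> r" "{x, y} = {v, p v}"
      unfolding arcs_def by blast
    then have v: "v \<in> K" "v \<noteq> r" "{x, y} = {v, p v}" "{v, p v} \<noteq> {a, p a}" using xy by auto
    then have "v \<noteq> a" by auto
    then have "v \<in> desc a \<longleftrightarrow> p v \<in> desc a" using desc_closed v by auto
    moreover have "(x = v \<and> y = p v) \<or> (x = p v \<and> y = v)" using v(3) by (simp add: doubleton_eq_iff)
    ultimately show "x \<in> desc a \<longleftrightarrow> y \<in> desc a" by blast
  qed
  ultimately have "r \<in> desc a" using closed_rtr[of "arcs - {{a, p a}}" "desc a" a r] desc_self assms by blast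
  then show False using root_notin_desc assms by simp
qed

lemma arcs_tree: "is_tree K arcs"
  unfolding is_tree_def
proof (intro conjI ballI)
  show "arcs \<subseteq> {e. card e = 2 \<and> e \<subseteq> K}" by (rule arcs_sub)
  show "graph_connected K arcs" by (rule arcs_conn)
  fix e assume "e \<in> arcs"
  then obtain a where "a \<in> K" "a \<noteq> r" "e = {a, p a}" unfolding arcs_def by blast
  then show "\<not> graph_connected K (arcs - {e})" using bridge by simp
qed

end

lemma bfs_tree:
  assumes sub: "S \<subseteq> {e. card e = 2 \<and> e \<subseteq> K}" and conn: "graph_connected K S" and r: "r \<in> K"
  shows "\<exists>p d. rtree K r p d \<and> rtree.arcs K r p \<subseteq> S"
proof -
  define R where "R = Rel S"
  define d where "d v = (LEAST k. (r, v) \<in> R ^^ k)" for v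
  have ex: "\<exists>k. (r, v) \<in> R ^^ k" if "v \<in> K" for v
  proof -
    have "(r, v) \<in> R\<^sup>*" using conn r that unfolding graph_connected_Rel R_def by blast
    then show ?thesis using rtrancl_power by blast
  qed
  have RK: "(a, b) \<in> R \<Longrightarrow> a \<in> K \<and> b \<in> K \<and> a \<noteq> b" for a b
  proof -
    assume "(a, b) \<in> R"
    then have "{a, b} \<in> S" by (simp add: R_def)
    then have "{a, b} \<in> {e. card e = 2 \<and> e \<subseteq> K}" using sub by (rule subsetD[rotated])
    then have "card {a, b} = 2" "{a, b} \<subseteq> K" by simp_all
    then have "a \<noteq> b" using card_dbl_neq[of a b] by simp
    then show ?thesis using \<open>{a, b} \<subseteq> K\<close> by simp
  qed
  define p where "p v = (SOME u. (r, u) \<in> R ^^ (d v - 1) \<and> (u, v) \<in> R)" for v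
  have pv: "(r, p v) \<in> R ^^ (d v - 1) \<and> (p v, v) \<in> R \<and> d v \<noteq> 0" if "v \<in> K" "v \<noteq> r" for v
  proof -
    have "(r, v) \<in> R ^^ d v" unfolding d_def using ex[OF that(1)] by (rule LeastI_ex)
    moreover have "d v \<noteq> 0"
    proof
      assume "d v = 0"
      then have "(r, v) \<in> R ^^ 0" using calculation by simp
      then show False using that by simp
    qed
    ultimately obtain n where n: "d v = Suc n" "(r, v) \<in> R ^^ Suc n" by (metis not0_implies_Suc)
    then obtain u where "(r, u) \<in> R ^^ n" "(u, v) \<in> R" by (meson relpow_Suc_E)
    then have "\<exists>u. (r, u) \<in> R ^^ (d v - 1) \<and> (u, v) \<in> R" using n by auto
    then have "(r, p v) \<in> R ^^ (d v - 1) \<and> (p v, v) \<in> R" unfolding p_def by (rule someI_ex)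
    then show ?thesis using n by simp
  qed
  have rt: "rtree K r p d"
  proof
    show "r \<in> K" by fact
    fix v assume v: "v \<in> K" "v \<noteq> r"
    show "p v \<in> K" using pv[OF v] RK by blast
    have "d (p v) \<le> d v - 1" using pv[OF v] unfolding d_def by (simp add: Least_le)
    then show "d (p v) < d v" using pv[OF v] by linarith
  qed
  moreover have "rtree.arcs K r p \<subseteq> S"
  proof
    fix e assume "e \<in> rtree.arcs K r p"
    then obtain v where v: "v \<in> K" "v \<noteq> r" "e = {v, p v}" unfolding rtree.arcs_def[OF rt] by blast
    then have "(p v, v) \<in> R" using pv[of v] by simp
    then have "(p v, v) \<in> Rel S" unfolding R_def .
    then have "(v, p v) \<in> Rel S" by (rule Rel_sym)
    then show "e \<in> S" using v(3) by simp
  qed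
  ultimately show ?thesis by blast
qed

lemma tree_by_card:
  assumes fin: "finite K" and sub: "S \<subseteq> {e. card e = 2 \<and> e \<subseteq> K}" and conn: "graph_connected K S"
    and r: "r \<in> K" and c: "card S = card K - 1"
  shows "is_tree K S"
proof -
  obtain p d where rt: "rtree K r p d" and s: "rtree.arcs K r p \<subseteq> S" using bfs_tree[OF sub conn r] by blast
  have "S \<subseteq> Pow K" using sub by blast
  then have "finite S" using fin by (simp add: finite_subset)
  moreover have "card (rtree.arcs K r p) = card S" using rtree.card_arcs[OF rt fin] c by simp
  ultimately have "rtree.arcs K r p = S" using s by (simp add: card_subset_eq)
  then show ?thesis using rtree.arcs_tree[OF rt] by simp
qed


definition RV :: "'a set set set \<Rightarrow> 'a \<Rightarrow> ('a set \<times> 'a set) set" where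
  "RV T v = {(a, b). {a, b} \<in> T \<and> v \<in> a \<and> v \<in> b}"

lemma dual_iff: "{s, t} \<in> dual_arcs K \<longleftrightarrow> s \<in> K \<and> t \<in> K \<and> s \<noteq> t \<and> card (s \<inter> t) = 2"
proof
  assume "{s, t} \<in> dual_arcs K"
  then have "\<exists>s' t'. {s, t} = {s', t'} \<and> s' \<in> K \<and> t' \<in> K \<and> s' \<noteq> t' \<and> card (s' \<inter> t') = 2"
    unfolding dual_arcs_def by (rule CollectD)
  then obtain s' t' where st: "{s, t} = {s', t'}" "s' \<in> K" "t' \<in> K" "s' \<noteq> t'" "card (s' \<inter> t') = 2"
    by (elim exE conjE) (rule that)
  then have "(s = s' \<and> t = t') \<or> (s = t' \<and> t = s')" by (meson doubleton_eq_iff)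
  then show "s \<in> K \<and> t \<in> K \<and> s \<noteq> t \<and> card (s \<inter> t) = 2"
  proof
    assume a: "s = s' \<and> t = t'"
    then have "s \<inter> t = s' \<inter> t'" by simp
    then have "card (s \<inter> t) = 2" using st(5) by simp
    then show ?thesis using st(2-4) a by simp
  next
    assume a: "s = t' \<and> t = s'"
    then have "s \<inter> t = s' \<inter> t'" by (simp add: Int_commute)
    then have "card (s \<inter> t) = 2" using st(5) by simp
    then show ?thesis using st(2-4) a by simp
  qed
next
  assume "s \<in> K \<and> t \<in> K \<and> s \<noteq> t \<and> card (s \<inter> t) = 2"
  then show "{s, t} \<in> dual_arcs K" unfolding dual_arcs_def by blast
qed

lemma dual_elem: "e \<in> dual_arcs K \<Longrightarrow> \<exists>s t. e = {s, t} \<and> s \<in> K \<and> t \<in> K \<and> s \<noteq> t \<and> card (s \<inter> t) = 2"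
  unfolding dual_arcs_def by (rule CollectD)

lemma dual_sub: "dual_arcs K \<subseteq> {e. card e = 2 \<and> e \<subseteq> K}"
proof
  fix e assume "e \<in> dual_arcs K"
  then have "\<exists>s t. e = {s, t} \<and> s \<in> K \<and> t \<in> K \<and> s \<noteq> t \<and> card (s \<inter> t) = 2" by (rule dual_elem)
  then obtain s t where st: "e = {s, t}" "s \<in> K" "t \<in> K" "s \<noteq> t"
    by (elim exE conjE) (rule that)
  then have "card e = 2" using card_dbl by simp
  moreover have "e \<subseteq> K" using st by blast
  ultimately show "e \<in> {e. card e = 2 \<and> e \<subseteq> K}" by blast
qed

locale mfd =
  fixes K :: "'v set set"
  assumes man: "simplicial_2_manifold K"
begin

lemma fin: "finite K" using man by (simp add: simplicial_2_manifold_def)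
lemma nonempty: "K \<noteq> {}" using man by (simp add: simplicial_2_manifold_def)
lemma tri: "t \<in> K \<Longrightarrow> card t = 3" using man by (simp add: simplicial_2_manifold_def)
lemma tri_fin: "t \<in> K \<Longrightarrow> finite t" using tri by (metis card_ge_0_finite zero_less_numeral)
lemma edge_le2: "e \<in> cedges K \<Longrightarrow> card {t\<in>K. e \<subseteq> t} \<le> 2" using man by (simp add: simplicial_2_manifold_def)
lemma link_conn: "v \<in> cverts K \<Longrightarrow> graph_connected (link_verts K v) (link_edges K v)"
  using man by (simp add: simplicial_2_manifold_def)

lemma no3:
  assumes "card e = 2" "e \<subseteq> s" "e \<subseteq> t" "e \<subseteq> u" "s \<in> K" "t \<in> K" "u \<in> K"
    "s \<noteq> t" "s \<noteq> u" "t \<noteq> u"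
  shows False
proof -
  have "e \<in> cedges K" unfolding cedges_def using assms by blast
  then have le: "card {t\<in>K. e \<subseteq> t} \<le> 2" by (rule edge_le2)
  have "{s, t, u} \<subseteq> {t\<in>K. e \<subseteq> t}" using assms by blast
  moreover have "finite {t\<in>K. e \<subseteq> t}" using fin by simp
  ultimately have "card {s, t, u} \<le> card {t\<in>K. e \<subseteq> t}" by (rule card_mono[rotated])
  moreover have "card {s, t, u} = 3" using assms(8,9,10) by simp
  ultimately show False using le by linarith
qed

lemma int_le2:
  assumes "s \<in> K" "t \<in> K" "s \<noteq> t"
  shows "card (s \<inter> t) \<le> 2"
proof (rule ccontr)
  assume "\<not> card (s \<inter> t) \<le> 2"
  then have "card (s \<inter> t) \<ge> 3" by linarith
  moreover have "card (s \<inter> t) \<le> card s" using tri_fin[OF assms(1)] by (simp add: card_mono)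
  ultimately have "card (s \<inter> t) = card s" using tri[OF assms(1)] by linarith
  then have "s \<inter> t = s" using tri_fin[OF assms(1)] by (metis Int_lower1 card_subset_eq)
  then have "s \<subseteq> t" by blast
  moreover have "card s = card t" using tri assms by simp
  ultimately have "s = t" using tri_fin[OF assms(2)] by (simp add: card_subset_eq)
  then show False using assms by simp
qed

lemma common2:
  assumes "s \<in> K" "t \<in> K" "s \<noteq> t" "a \<noteq> b" "a \<in> s" "a \<in> t" "b \<in> s" "b \<in> t"
  shows "card (s \<inter> t) = 2"
proof -
  have "{a, b} \<subseteq> s \<inter> t" using assms by blast
  then have "card {a, b} \<le> card (s \<inter> t)" using tri_fin[OF assms(1)] by (simp add: card_mono)
  then have "2 \<le> card (s \<inter> t)" using card_dbl[OF assms(4)] by simp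
  then show ?thesis using int_le2[OF assms(1-3)] by linarith
qed

lemma common_arc:
  assumes "s \<in> K" "t \<in> K" "s \<noteq> t" "a \<noteq> b" "a \<in> s" "a \<in> t" "b \<in> s" "b \<in> t"
  shows "{s, t} \<in> dual_arcs K"
  using common2[OF assms] assms(1-3) by (simp add: dual_iff)

lemma H:
  assumes "s \<in> K" "t \<in> K" "v \<noteq> a" "v \<in> s" "a \<in> s" "v \<in> t" "a \<in> t"
  shows "(s, t) \<in> (RV (dual_arcs K) v)\<^sup>*"
proof (cases "s = t")
  case True then show ?thesis by simp
next
  case False
  then have "{s, t} \<in> dual_arcs K" using common_arc[OF assms(1,2) False assms(3,4,6,5,7)] by blast
  then have "(s, t) \<in> RV (dual_arcs K) v" using assms by (simp add: RV_def)
  then show ?thesis by simp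
qed

lemma star_conn:
  assumes v: "v \<in> cverts K" and s: "s \<in> K" "v \<in> s" and t: "t \<in> K" "v \<in> t"
  shows "(s, t) \<in> (RV (dual_arcs K) v)\<^sup>*"
proof -
  have c3: "card s = 3" "card t = 3" using tri s t by auto
  obtain x where x: "x \<in> s" "x \<noteq> v"
  proof -
    have "card (s - {v}) = 2" using c3 s tri_fin by simp
    then have "s - {v} \<noteq> {}" by (metis card.empty zero_neq_numeral)
    then show ?thesis using that by blast
  qed
  obtain y where y: "y \<in> t" "y \<noteq> v"
  proof -
    have "card (t - {v}) = 2" using c3 t tri_fin by simp
    then have "t - {v} \<noteq> {}" by (metis card.empty zero_neq_numeral)
    then show ?thesis using that by blast
  qed
  have "s - {v} \<in> link_edges K v" unfolding link_edges_def using s by blast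
  then have xl: "x \<in> link_verts K v" unfolding link_verts_def using x by blast
  have "t - {v} \<in> link_edges K v" unfolding link_edges_def using t by blast
  then have yl: "y \<in> link_verts K v" unfolding link_verts_def using y by blast
  have "(x, y) \<in> (Rel (link_edges K v))\<^sup>*"
    using link_conn[OF v] xl yl by (simp add: graph_connected_Rel)
  then have "\<forall>t'. t' \<in> K \<longrightarrow> v \<in> t' \<longrightarrow> y \<in> t' \<longrightarrow> (s, t') \<in> (RV (dual_arcs K) v)\<^sup>*"
  proof (induction rule: rtrancl_induct)
    case base
    show ?case
    proof (intro allI impI)
      fix t' assume "t' \<in> K" "v \<in> t'" "x \<in> t'"
      then show "(s, t') \<in> (RV (dual_arcs K) v)\<^sup>*" using H[of s t' v x] s x by simp
    qed
  next
    case (step b c)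
    then have "{b, c} \<in> link_edges K v" by simp
    then have "\<exists>u. {b, c} = u - {v} \<and> u \<in> K \<and> v \<in> u" unfolding link_edges_def by (rule CollectD)
    then obtain u where u: "u \<in> K" "v \<in> u" "{b, c} = u - {v}" by (elim exE conjE) (rule that)
    have "b \<in> u - {v}" "c \<in> u - {v}" unfolding u(3)[symmetric] by simp_all
    then have bc: "b \<in> u" "c \<in> u" "b \<noteq> v" "c \<noteq> v" by simp_all
    have su: "(s, u) \<in> (RV (dual_arcs K) v)\<^sup>*" using step.IH u(1,2) bc(1) by simp
    show ?case
    proof (intro allI impI)
      fix t' assume "t' \<in> K" "v \<in> t'" "c \<in> t'"
      then have "(u, t') \<in> (RV (dual_arcs K) v)\<^sup>*" using H[of u t' v c] u(1,2) bc by simp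
      then show "(s, t') \<in> (RV (dual_arcs K) v)\<^sup>*" using su by simp
    qed
  qed
  then show ?thesis using t y by simp
qed

lemma RV_Rel: "(s, t) \<in> (RV T v)\<^sup>* \<Longrightarrow> (s, t) \<in> (Rel T)\<^sup>*"
proof -
  assume "(s, t) \<in> (RV T v)\<^sup>*"
  moreover have "RV T v \<subseteq> Rel T" by (auto simp: RV_def Rel_def)
  ultimately show ?thesis using rtrancl_mono by blast
qed

lemma dual_conn:
  assumes cc: "complex_connected K"
  shows "graph_connected K (dual_arcs K)"
  unfolding graph_connected_Rel
proof (intro ballI)
  fix s t assume s: "s \<in> K" and t: "t \<in> K"
  have "card s = 3" using tri s by simp
  then have "s \<noteq> {}" by (metis card.empty zero_neq_numeral)
  then obtain a where a: "a \<in> s" by blast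
  have "card t = 3" using tri t by simp
  then have "t \<noteq> {}" by (metis card.empty zero_neq_numeral)
  then obtain b where b: "b \<in> t" by blast
  have av: "a \<in> cverts K" "b \<in> cverts K" unfolding cverts_def using a b s t by blast+
  have "graph_connected (cverts K) (cedges K)" using cc by (simp add: complex_connected_def)
  then have "(a, b) \<in> (Rel (cedges K))\<^sup>*" using av unfolding graph_connected_Rel by blast
  then have "\<forall>t'. t' \<in> K \<longrightarrow> b \<in> t' \<longrightarrow> (s, t') \<in> (Rel (dual_arcs K))\<^sup>*"
  proof (induction rule: rtrancl_induct)
    case base
    show ?case
    proof (intro allI impI)
      fix t' assume "t' \<in> K" "a \<in> t'"
      then have "(s, t') \<in> (RV (dual_arcs K) a)\<^sup>*" using star_conn[OF av(1) s a] by simp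
      then show "(s, t') \<in> (Rel (dual_arcs K))\<^sup>*" by (rule RV_Rel)
    qed
  next
    case (step y z)
    then have "{y, z} \<in> cedges K" by simp
    then have "\<exists>u\<in>K. {y, z} \<subseteq> u" unfolding cedges_def by simp
    then obtain u where u: "u \<in> K" "{y, z} \<subseteq> u" by (elim bexE) (rule that)
    then have yz: "y \<in> u" "z \<in> u" by simp_all
    then have su: "(s, u) \<in> (Rel (dual_arcs K))\<^sup>*" using step.IH u(1) by simp
    have zv: "z \<in> cverts K" unfolding cverts_def using u(1) yz(2) by blast
    show ?case
    proof (intro allI impI)
      fix t' assume "t' \<in> K" "z \<in> t'"
      then have "(u, t') \<in> (RV (dual_arcs K) z)\<^sup>*" using star_conn[OF zv u(1) yz(2)] by simp
      then have "(u, t') \<in> (Rel (dual_arcs K))\<^sup>*" by (rule RV_Rel)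
      then show "(s, t') \<in> (Rel (dual_arcs K))\<^sup>*" using su by simp
    qed
  qed
  then show "(s, t) \<in> (Rel (dual_arcs K))\<^sup>*" using t b by simp
qed

lemma nb_dual_le3: "t \<in> K \<Longrightarrow> nb K (dual_arcs K) t \<le> 3"
proof -
  assume t: "t \<in> K"
  define N where "N = {s\<in>K. {s, t} \<in> dual_arcs K}"
  have Nd: "s \<in> N \<Longrightarrow> s \<in> K \<and> s \<noteq> t \<and> card (s \<inter> t) = 2" for s
    by (simp add: N_def dual_iff)
  have "(\<lambda>s. s \<inter> t) ` N \<subseteq> {e. e \<subseteq> t \<and> card e = 2}"
  proof
    fix e assume "e \<in> (\<lambda>s. s \<inter> t) ` N"
    then obtain s where "s \<in> N" "e = s \<inter> t" by (elim imageE) (rule that)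
    then show "e \<in> {e. e \<subseteq> t \<and> card e = 2}" using Nd by simp
  qed
  moreover have "inj_on (\<lambda>s. s \<inter> t) N"
  proof (rule inj_onI)
    fix s1 s2 assume s12: "s1 \<in> N" "s2 \<in> N" "s1 \<inter> t = s2 \<inter> t"
    show "s1 = s2"
    proof (rule ccontr)
      assume ne: "s1 \<noteq> s2"
      have a: "s1 \<in> K" "s1 \<noteq> t" "card (s1 \<inter> t) = 2" "s2 \<in> K" "s2 \<noteq> t"
        using Nd[OF s12(1)] Nd[OF s12(2)] by simp_all
      have "s1 \<inter> t \<subseteq> s2" using s12(3) by blast
      then show False
        using no3[of "s1 \<inter> t" s1 s2 t] a ne t by blast
    qed
  qed
  moreover have "card {e. e \<subseteq> t \<and> card e = 2} = 3"
  proof -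
    have "card {e. e \<subseteq> t \<and> card e = 2} = card t choose 2" using tri_fin[OF t] by (rule n_subsets)
    then show ?thesis using tri[OF t] by (simp add: choose_two)
  qed
  moreover have "finite {e. e \<subseteq> t \<and> card e = 2}" using tri_fin[OF t] by simp
  ultimately have "card N \<le> 3" by (metis card_inj_on_le)
  then show ?thesis unfolding nb_def N_def .
qed

end


definition GL :: "'v set set set \<Rightarrow> (('v set \<times> 'v) \<times> ('v set \<times> 'v)) set" where
  "GL T = glue T \<union> (glue T)\<inverse>"

definition img :: "'v set set set \<Rightarrow> 'v set \<Rightarrow> ('v set \<times> 'v) set set" where
  "img T t = (\<lambda>v. unfold_vertex T t v) ` t"

lemma unfolding_img: "topological_unfolding K T = img T ` K"
  by (simp add: topological_unfolding_def img_def)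

lemma glue_iff: "((s, a), (t, b)) \<in> glue T \<longleftrightarrow> a = b \<and> {s, t} \<in> T \<and> a \<in> s \<and> a \<in> t"
  unfolding glue_def by blast

lemma RV_sym: "(x, y) \<in> RV T v \<Longrightarrow> (y, x) \<in> RV T v"
proof -
  assume "(x, y) \<in> RV T v"
  then have "{x, y} \<in> T" "v \<in> x" "v \<in> y" by (simp_all add: RV_def)
  moreover have "{y, x} = {x, y}" by (rule insert_commute)
  ultimately show ?thesis by (simp add: RV_def)
qed

lemma GL_C: "(p, q) \<in> (GL T)\<^sup>* \<Longrightarrow> snd q = snd p \<and> (fst p, fst q) \<in> (RV T (snd p))\<^sup>*"
proof (induction rule: rtrancl_induct)
  case base then show ?case by simp
next
  case (step y z)
  obtain s a where y: "y = (s, a)" by (cases y)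
  obtain t b where z: "z = (t, b)" by (cases z)
  have "((s, a), (t, b)) \<in> glue T \<or> ((t, b), (s, a)) \<in> glue T"
    using step(2) y z by (auto simp: GL_def)
  then have ab: "a = b \<and> (s, t) \<in> RV T a"
  proof
    assume "((s, a), (t, b)) \<in> glue T"
    then show ?thesis unfolding glue_iff RV_def by blast
  next
    assume "((t, b), (s, a)) \<in> glue T"
    then have "b = a" "(t, s) \<in> RV T a" unfolding glue_iff RV_def by blast+
    then show ?thesis using RV_sym by metis
  qed
  have "snd y = snd p" "(fst p, fst y) \<in> (RV T (snd p))\<^sup>*" using step.IH by simp_all
  then have "a = snd p" "(fst p, s) \<in> (RV T (snd p))\<^sup>*" using y by simp_all
  then have "(fst p, t) \<in> (RV T (snd p))\<^sup>*" using ab by (metis rtrancl.rtrancl_into_rtrancl)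
  moreover have "snd z = snd p" using z ab \<open>a = snd p\<close> by simp
  ultimately show ?case using z by simp
qed

lemma GL_C': "(s, t) \<in> (RV T a)\<^sup>* \<Longrightarrow> ((s, a), (t, a)) \<in> (GL T)\<^sup>*"
proof (induction rule: rtrancl_induct)
  case base then show ?case by simp
next
  case (step y z)
  then have "((y, a), (z, a)) \<in> glue T" by (simp add: glue_iff RV_def)
  then have "((y, a), (z, a)) \<in> GL T" by (simp add: GL_def)
  then show ?case using step.IH by simp
qed

lemma GL_sym: "(p, q) \<in> (GL T)\<^sup>* \<Longrightarrow> (q, p) \<in> (GL T)\<^sup>*"
proof -
  assume "(p, q) \<in> (GL T)\<^sup>*"
  then have "(q, p) \<in> ((GL T)\<inverse>)\<^sup>*" by (simp add: rtrancl_converse)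
  moreover have "(GL T)\<inverse> = GL T" by (auto simp: GL_def)
  ultimately show ?thesis by simp
qed

lemma cls_self: "(t, v) \<in> unfold_vertex T t v"
  by (simp add: unfold_vertex_def GL_def[symmetric])

lemma cls_snd: "q \<in> unfold_vertex T t v \<Longrightarrow> snd q = v"
proof -
  assume "q \<in> unfold_vertex T t v"
  then have "((t, v), q) \<in> (GL T)\<^sup>*" by (simp add: unfold_vertex_def GL_def)
  from GL_C[OF this] show ?thesis by simp
qed

lemma cls_eq: "unfold_vertex T s a = unfold_vertex T t b \<longleftrightarrow> a = b \<and> (s, t) \<in> (RV T a)\<^sup>*"
proof
  assume h: "unfold_vertex T s a = unfold_vertex T t b"
  have "(t, b) \<in> unfold_vertex T t b" by (rule cls_self)
  then have "(t, b) \<in> unfold_vertex T s a" using h by simp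
  then have "((s, a), (t, b)) \<in> (GL T)\<^sup>*" by (simp add: unfold_vertex_def GL_def)
  from GL_C[OF this] show "a = b \<and> (s, t) \<in> (RV T a)\<^sup>*" by simp
next
  assume h: "a = b \<and> (s, t) \<in> (RV T a)\<^sup>*"
  then have "((s, a), (t, a)) \<in> (GL T)\<^sup>*" using GL_C'[of s t T a] by blast
  then have st: "((s, a), (t, b)) \<in> (GL T)\<^sup>*" using h by blast
  then have ts: "((t, b), (s, a)) \<in> (GL T)\<^sup>*" by (rule GL_sym)
  have "\<And>q. ((s, a), q) \<in> (GL T)\<^sup>* \<longleftrightarrow> ((t, b), q) \<in> (GL T)\<^sup>*"
    using st ts by (meson rtrancl_trans)
  then show "unfold_vertex T s a = unfold_vertex T t b"
    by (simp add: unfold_vertex_def GL_def[symmetric])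
qed

lemma img_snd: "snd ` \<Union>(img T t) = t"
proof
  show "snd ` \<Union>(img T t) \<subseteq> t"
  proof
    fix v assume "v \<in> snd ` \<Union>(img T t)"
    then obtain q where q: "q \<in> \<Union>(img T t)" "v = snd q" by (elim imageE) (rule that)
    then obtain u where "u \<in> t" "q \<in> unfold_vertex T t u" unfolding img_def by blast
    then show "v \<in> t" using cls_snd q(2) by metis
  qed
  show "t \<subseteq> snd ` \<Union>(img T t)"
  proof
    fix v assume "v \<in> t"
    then have "unfold_vertex T t v \<in> img T t" unfolding img_def by simp
    moreover have "(t, v) \<in> unfold_vertex T t v" by (rule cls_self)
    ultimately have "(t, v) \<in> \<Union>(img T t)" by blast
    moreover have "v = snd (t, v)" by simp
    ultimately show "v \<in> snd ` \<Union>(img T t)" by (rule rev_image_eqI)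
  qed
qed

lemma img_inj: "img T s = img T t \<Longrightarrow> s = t"
proof -
  assume h: "img T s = img T t"
  have "s = snd ` \<Union>(img T s)" by (simp only: img_snd)
  also have "\<dots> = snd ` \<Union>(img T t)" using h by simp
  also have "\<dots> = t" by (simp only: img_snd)
  finally show ?thesis .
qed

lemma img_int:
  "img T s \<inter> img T t = (\<lambda>v. unfold_vertex T s v) ` {u\<in>s \<inter> t. (s, t) \<in> (RV T u)\<^sup>*}"
proof
  show "img T s \<inter> img T t \<subseteq> (\<lambda>v. unfold_vertex T s v) ` {u\<in>s \<inter> t. (s, t) \<in> (RV T u)\<^sup>*}"
  proof
    fix X assume X: "X \<in> img T s \<inter> img T t"
    then have "X \<in> (\<lambda>v. unfold_vertex T s v) ` s" unfolding img_def by simp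
    then obtain u where u: "u \<in> s" "X = unfold_vertex T s u" by (elim imageE) (rule that)
    have "X \<in> (\<lambda>v. unfold_vertex T t v) ` t" using X unfolding img_def by simp
    then obtain u' where u': "u' \<in> t" "X = unfold_vertex T t u'" by (elim imageE) (rule that)
    have "unfold_vertex T s u = unfold_vertex T t u'" using u(2) u'(2) by simp
    then have uu: "u = u'" "(s, t) \<in> (RV T u)\<^sup>*" unfolding cls_eq by blast+
    then have "u \<in> {u\<in>s \<inter> t. (s, t) \<in> (RV T u)\<^sup>*}" using u(1) u'(1) by simp
    then show "X \<in> (\<lambda>v. unfold_vertex T s v) ` {u\<in>s \<inter> t. (s, t) \<in> (RV T u)\<^sup>*}"
      using u(2) by (rule rev_image_eqI)
  qed
  show "(\<lambda>v. unfold_vertex T s v) ` {u\<in>s \<inter> t. (s, t) \<in> (RV T u)\<^sup>*} \<subseteq> img T s \<inter> img T t"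
  proof
    fix X assume "X \<in> (\<lambda>v. unfold_vertex T s v) ` {u\<in>s \<inter> t. (s, t) \<in> (RV T u)\<^sup>*}"
    then obtain u where u0: "u \<in> {u\<in>s \<inter> t. (s, t) \<in> (RV T u)\<^sup>*}" "X = unfold_vertex T s u"
      by (elim imageE) (rule that)
    then have u: "u \<in> s" "u \<in> t" "(s, t) \<in> (RV T u)\<^sup>*" by simp_all
    then have e: "unfold_vertex T s u = unfold_vertex T t u" unfolding cls_eq by simp
    have "X \<in> img T s" unfolding img_def using u(1) u0(2) by (rule rev_image_eqI)
    moreover have "X \<in> img T t" unfolding img_def using u(2) u0(2) e by (metis rev_image_eqI)
    ultimately show "X \<in> img T s \<inter> img T t" by simp
  qed
qed

lemma card_img_int:
  "card (img T s \<inter> img T t) = card {u\<in>s \<inter> t. (s, t) \<in> (RV T u)\<^sup>*}"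
proof -
  have "inj_on (\<lambda>v. unfold_vertex T s v) {u\<in>s \<inter> t. (s, t) \<in> (RV T u)\<^sup>*}"
    by (rule inj_onI) (simp add: cls_eq)
  then show ?thesis by (simp add: img_int card_image)
qed

context mfd
begin

lemma RB:
  assumes tree: "is_tree K T" and TA: "T \<subseteq> dual_arcs K"
    and s: "s \<in> K" and t: "t \<in> K" and st: "s \<noteq> t" and ab: "a \<noteq> b"
    and as: "a \<in> s" "a \<in> t" and bs: "b \<in> s" "b \<in> t"
    and pa: "(s, t) \<in> (RV T a)\<^sup>*" and pb: "(s, t) \<in> (RV T b)\<^sup>*"
  shows "{s, t} \<in> T"
proof (rule ccontr)
  assume nT: "{s, t} \<notin> T"
  obtain q where q1: "(s, q) \<in> RV T b" and q2: "(q, t) \<in> {(x, y). (x, y) \<in> RV T b \<and> x \<noteq> s \<and> y \<noteq> s}\<^sup>*"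
    using leave_start[OF pb st] by blast
  have sqT: "{s, q} \<in> T" and bq: "b \<in> q" using q1 by (simp_all add: RV_def)
  then have "{s, q} \<in> dual_arcs K" using TA by blast
  then have qK: "q \<in> K" and sq: "s \<noteq> q" by (simp_all add: dual_iff)
  have qt: "q \<noteq> t" using sqT nT by metis
  have aq: "a \<notin> q"
  proof
    assume "a \<in> q"
    have c: "card {a, b} = 2" using card_dbl[OF ab] .
    show False
      using no3[OF c _ _ _ s t qK st sq qt[symmetric]] as bs bq \<open>a \<in> q\<close> by blast
  qed
  define T' where "T' = T - {{s, q}}"
  have sub1: "RV T a \<subseteq> Rel T'"
  proof
    fix x assume "x \<in> RV T a"
    then obtain x1 x2 where x: "x = (x1, x2)" "{x1, x2} \<in> T" "a \<in> x1" "a \<in> x2"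
      by (auto simp: RV_def)
    have "{x1, x2} \<noteq> {s, q}"
    proof
      assume "{x1, x2} = {s, q}"
      then have "q \<in> {x1, x2}" by simp
      then show False using x aq by blast
    qed
    then show "x \<in> Rel T'" using x by (simp add: T'_def)
  qed
  have sub2: "{(x, y). (x, y) \<in> RV T b \<and> x \<noteq> s \<and> y \<noteq> s} \<subseteq> Rel T'"
  proof
    fix x assume "x \<in> {(x, y). (x, y) \<in> RV T b \<and> x \<noteq> s \<and> y \<noteq> s}"
    then obtain x1 x2 where x: "x = (x1, x2)" "{x1, x2} \<in> T" "x1 \<noteq> s" "x2 \<noteq> s"
      by (auto simp: RV_def)
    have "{x1, x2} \<noteq> {s, q}"
    proof
      assume "{x1, x2} = {s, q}"
      then have "s \<in> {x1, x2}" by simp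
      then show False using x by blast
    qed
    then show "x \<in> Rel T'" using x by (simp add: T'_def)
  qed
  have "(s, t) \<in> (Rel T')\<^sup>*" using pa sub1 rtrancl_mono by blast
  moreover have "(q, t) \<in> (Rel T')\<^sup>*" using q2 sub2 rtrancl_mono by blast
  then have "(t, q) \<in> (Rel T')\<^sup>*" by (rule Rel_rtr_sym)
  ultimately have sq': "(s, q) \<in> (Rel T')\<^sup>*" by simp
  then have qs': "(q, s) \<in> (Rel T')\<^sup>*" by (rule Rel_rtr_sym)
  have "Rel T \<subseteq> (Rel T')\<^sup>*"
  proof
    fix x assume "x \<in> Rel T"
    then obtain x1 x2 where x: "x = (x1, x2)" "{x1, x2} \<in> T" by (auto simp: Rel_def)
    show "x \<in> (Rel T')\<^sup>*"
    proof (cases "{x1, x2} = {s, q}")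
      case True
      then have "(x1 = s \<and> x2 = q) \<or> (x1 = q \<and> x2 = s)" by (meson doubleton_eq_iff)
      then show ?thesis using x sq' qs' by blast
    next
      case False
      then have "(x1, x2) \<in> Rel T'" using x by (simp add: T'_def)
      then show ?thesis using x(1) by (metis r_into_rtrancl)
    qed
  qed
  then have "(Rel T)\<^sup>* \<subseteq> (Rel T')\<^sup>*" by (rule rtrancl_subset_rtrancl)
  moreover have "graph_connected K T" using tree by (simp add: is_tree_def)
  ultimately have "graph_connected K T'" unfolding graph_connected_Rel by blast
  moreover have "\<not> graph_connected K T'" using tree sqT unfolding is_tree_def T'_def by blast
  ultimately show False by simp
qed

lemma adj_iff:
  assumes tree: "is_tree K T" and TA: "T \<subseteq> dual_arcs K"
    and s: "s \<in> K" and t: "t \<in> K" and st: "s \<noteq> t"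
  shows "card (img T s \<inter> img T t) = 2 \<longleftrightarrow> {s, t} \<in> T"
proof
  assume "card (img T s \<inter> img T t) = 2"
  then have "card {u\<in>s \<inter> t. (s, t) \<in> (RV T u)\<^sup>*} = 2" by (simp add: card_img_int)
  then obtain a b where ab: "{u\<in>s \<inter> t. (s, t) \<in> (RV T u)\<^sup>*} = {a, b}" "a \<noteq> b"
    by (meson card_2_iff)
  then have "a \<in> {u\<in>s \<inter> t. (s, t) \<in> (RV T u)\<^sup>*}" "b \<in> {u\<in>s \<inter> t. (s, t) \<in> (RV T u)\<^sup>*}"
    by simp_all
  then have "a \<in> s" "a \<in> t" "(s, t) \<in> (RV T a)\<^sup>*" "b \<in> s" "b \<in> t" "(s, t) \<in> (RV T b)\<^sup>*" by simp_all
  then show "{s, t} \<in> T" using RB[OF tree TA s t st ab(2)] by blast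
next
  assume h: "{s, t} \<in> T"
  then have "{s, t} \<in> dual_arcs K" using TA by blast
  then have c: "card (s \<inter> t) = 2" by (simp add: dual_iff)
  have "{u\<in>s \<inter> t. (s, t) \<in> (RV T u)\<^sup>*} = s \<inter> t"
  proof
    show "{u\<in>s \<inter> t. (s, t) \<in> (RV T u)\<^sup>*} \<subseteq> s \<inter> t" by blast
    show "s \<inter> t \<subseteq> {u\<in>s \<inter> t. (s, t) \<in> (RV T u)\<^sup>*}"
    proof
      fix u assume "u \<in> s \<inter> t"
      then have "(s, t) \<in> RV T u" using h by (simp add: RV_def)
      then show "u \<in> {u\<in>s \<inter> t. (s, t) \<in> (RV T u)\<^sup>*}" using \<open>u \<in> s \<inter> t\<close> by blast
    qed
  qed
  then show "card (img T s \<inter> img T t) = 2" using c by (simp add: card_img_int)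
qed

lemma unfold_col:
  assumes tree: "is_tree K T" and TA: "T \<subseteq> dual_arcs K"
    and ch: "checkered_coloring (topological_unfolding K T)"
  shows "tree_col K T"
proof -
  obtain white where w1: "\<forall>S\<in>img T ` K. \<forall>S'\<in>img T ` K. S \<noteq> S' \<and> card (S \<inter> S') = 2 \<longrightarrow> white S \<noteq> white S'"
    and w2: "\<forall>S\<in>img T ` K. white S \<longrightarrow> card {S'\<in>img T ` K. S' \<noteq> S \<and> card (S' \<inter> S) = 2} = 3"
    using ch unfolding checkered_coloring_def unfolding_img by (elim exE conjE) (rule that)
  define col where "col t = white (img T t)" for t
  have arc_ne: "{s, t} \<in> T \<Longrightarrow> s \<noteq> t" for s t
  proof -
    assume "{s, t} \<in> T"
    then have "{s, t} \<in> dual_arcs K" using TA by blast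
    then show "s \<noteq> t" by (simp add: dual_iff)
  qed
  have P1: "\<forall>s\<in>K. \<forall>t\<in>K. {s, t} \<in> T \<longrightarrow> col s \<noteq> col t"
  proof (intro ballI impI)
    fix s t assume s: "s \<in> K" and t: "t \<in> K" and h: "{s, t} \<in> T"
    have st: "s \<noteq> t" using arc_ne h .
    have ne: "img T s \<noteq> img T t"
    proof
      assume "img T s = img T t"
      then have "s = t" by (rule img_inj)
      then show False using st by simp
    qed
    have c2: "card (img T s \<inter> img T t) = 2" using adj_iff[OF tree TA s t st] h by simp
    have si: "img T s \<in> img T ` K" and ti: "img T t \<in> img T ` K" using s t by simp_all
    from w1 si ti have "img T s \<noteq> img T t \<and> card (img T s \<inter> img T t) = 2 \<longrightarrow> white (img T s) \<noteq> white (img T t)"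
      by blast
    then show "col s \<noteq> col t" using ne c2 unfolding col_def by simp
  qed
  have P2: "\<forall>t\<in>K. col t \<longrightarrow> nb K T t = 3"
  proof (intro ballI impI)
    fix t assume t: "t \<in> K" and c: "col t"
    have "{S'\<in>img T ` K. S' \<noteq> img T t \<and> card (S' \<inter> img T t) = 2} = img T ` {s\<in>K. {s, t} \<in> T}"
    proof
      show "{S'\<in>img T ` K. S' \<noteq> img T t \<and> card (S' \<inter> img T t) = 2} \<subseteq> img T ` {s\<in>K. {s, t} \<in> T}"
      proof
        fix S assume S: "S \<in> {S'\<in>img T ` K. S' \<noteq> img T t \<and> card (S' \<inter> img T t) = 2}"
        then have "S \<in> img T ` K" by simp
        then obtain s where s0: "s \<in> K" "S = img T s" by (elim imageE) (rule that)
        have "S \<noteq> img T t" "card (S \<inter> img T t) = 2" using S by simp_all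
        then have s: "s \<in> K" "S = img T s" "img T s \<noteq> img T t" "card (img T s \<inter> img T t) = 2"
          using s0 by simp_all
        then have "s \<noteq> t" by metis
        then have "{s, t} \<in> T" using adj_iff[OF tree TA s(1) t] s(4) by simp
        then have "s \<in> {s\<in>K. {s, t} \<in> T}" using s(1) by simp
        then show "S \<in> img T ` {s\<in>K. {s, t} \<in> T}" using s(2) by (rule rev_image_eqI)
      qed
      show "img T ` {s\<in>K. {s, t} \<in> T} \<subseteq> {S'\<in>img T ` K. S' \<noteq> img T t \<and> card (S' \<inter> img T t) = 2}"
      proof
        fix S assume "S \<in> img T ` {s\<in>K. {s, t} \<in> T}"
        then obtain s where s0: "s \<in> {s\<in>K. {s, t} \<in> T}" "S = img T s" by (elim imageE) (rule that)
        then have s: "s \<in> K" "{s, t} \<in> T" "S = img T s" by simp_all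
        then have st: "s \<noteq> t" using arc_ne by simp
        then have "img T s \<noteq> img T t"
        proof -
          assume st: "s \<noteq> t"
          show "img T s \<noteq> img T t"
          proof
            assume "img T s = img T t"
            then have "s = t" by (rule img_inj)
            then show False using st by simp
          qed
        qed
        moreover have "card (img T s \<inter> img T t) = 2" using adj_iff[OF tree TA s(1) t st] s(2) by simp
        moreover have "img T s \<in> img T ` K" using s(1) by simp
        ultimately show "S \<in> {S'\<in>img T ` K. S' \<noteq> img T t \<and> card (S' \<inter> img T t) = 2}"
          using s(3) by simp
      qed
    qed
    moreover have "inj_on (img T) {s\<in>K. {s, t} \<in> T}" by (rule inj_onI) (rule img_inj)
    ultimately have "card {S'\<in>img T ` K. S' \<noteq> img T t \<and> card (S' \<inter> img T t) = 2} = nb K T t"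
      unfolding nb_def by (simp add: card_image)
    moreover have "white (img T t)" using c unfolding col_def .
    moreover have "img T t \<in> img T ` K" using t by simp
    then have "white (img T t) \<longrightarrow> card {S'\<in>img T ` K. S' \<noteq> img T t \<and> card (S' \<inter> img T t) = 2} = 3"
      using w2 by blast
    ultimately show "nb K T t = 3" by simp
  qed
  show ?thesis unfolding tree_col_def using P1 P2 by blast
qed

end


section \<open>Transfer along an injective renaming of vertices\<close>

locale ren =
  fixes K :: "'v set set" and f :: "'v \<Rightarrow> 'w"
  assumes inj: "inj_on f (cverts K)"
begin

definition K' where "K' = (\<lambda>t. f ` t) ` K"

lemma sub_cv: "t \<in> K \<Longrightarrow> t \<subseteq> cverts K" unfolding cverts_def by blast

lemma img_sub_iff: "A \<subseteq> cverts K \<Longrightarrow> B \<subseteq> cverts K \<Longrightarrow> f ` A \<subseteq> f ` B \<longleftrightarrow> A \<subseteq> B"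
proof
  assume A: "A \<subseteq> cverts K" and B: "B \<subseteq> cverts K" and h: "f ` A \<subseteq> f ` B"
  show "A \<subseteq> B"
  proof
    fix a assume a: "a \<in> A"
    then have "f a \<in> f ` B" using h by blast
    then obtain b where b: "b \<in> B" "f a = f b" by (elim imageE) (rule that)
    then have "a = b" using inj A B a by (meson inj_onD subsetD)
    then show "a \<in> B" using b by simp
  qed
next
  assume "A \<subseteq> B" then show "f ` A \<subseteq> f ` B" by (rule image_mono)
qed

lemma img_eq_iff: "A \<subseteq> cverts K \<Longrightarrow> B \<subseteq> cverts K \<Longrightarrow> f ` A = f ` B \<longleftrightarrow> A = B"
  using inj by (rule inj_on_image_eq_iff)

lemma card_img: "A \<subseteq> cverts K \<Longrightarrow> card (f ` A) = card A"
  using inj by (meson card_image inj_on_subset)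

lemma cverts': "cverts K' = f ` cverts K"
  unfolding K'_def cverts_def by blast

lemma injK: "inj_on (\<lambda>t. f ` t) K"
proof (rule inj_onI)
  fix s t assume "s \<in> K" "t \<in> K" "f ` s = f ` t"
  then show "s = t" using img_eq_iff sub_cv by blast
qed

lemma cardK': "card K' = card K"
  unfolding K'_def using injK by (rule card_image)

lemma cedges': "cedges K' = (\<lambda>e. f ` e) ` cedges K"
proof
  show "cedges K' \<subseteq> (\<lambda>e. f ` e) ` cedges K"
  proof
    fix e' assume "e' \<in> cedges K'"
    then have c: "card e' = 2" and "\<exists>t'\<in>K'. e' \<subseteq> t'" unfolding cedges_def by simp_all
    then obtain t' where t': "t' \<in> K'" "e' \<subseteq> t'" by (elim bexE) (rule that)
    then obtain t where t: "t \<in> K" "t' = f ` t" unfolding K'_def by (elim imageE) (rule that)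
    then have "e' \<subseteq> f ` t" using t' by simp
    then obtain e where e: "e \<subseteq> t" "e' = f ` e" by (meson subset_imageE)
    have "e \<subseteq> cverts K" using e(1) sub_cv[OF t(1)] by blast
    then have "card e = 2" using card_img e(2) c by simp
    then have "e \<in> cedges K" unfolding cedges_def using e(1) t(1) by blast
    then show "e' \<in> (\<lambda>e. f ` e) ` cedges K" using e(2) by (rule rev_image_eqI)
  qed
  show "(\<lambda>e. f ` e) ` cedges K \<subseteq> cedges K'"
  proof
    fix e' assume "e' \<in> (\<lambda>e. f ` e) ` cedges K"
    then obtain e where e: "e \<in> cedges K" "e' = f ` e" by (elim imageE) (rule that)
    then have c: "card e = 2" and "\<exists>t\<in>K. e \<subseteq> t" unfolding cedges_def by simp_all
    then obtain t where t: "t \<in> K" "e \<subseteq> t" by (elim bexE) (rule that)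
    have "e \<subseteq> cverts K" using t sub_cv by blast
    then have "card e' = 2" using card_img e(2) c by simp
    moreover have "f ` t \<in> K'" unfolding K'_def using t(1) by simp
    moreover have "e' \<subseteq> f ` t" using e(2) t(2) by blast
    ultimately show "e' \<in> cedges K'" unfolding cedges_def by blast
  qed
qed

lemma cedges_sub: "e \<in> cedges K \<Longrightarrow> e \<subseteq> cverts K"
  unfolding cedges_def using sub_cv by blast

lemma injE: "inj_on (\<lambda>e. f ` e) (cedges K)"
proof (rule inj_onI)
  fix s t assume "s \<in> cedges K" "t \<in> cedges K" "f ` s = f ` t"
  then show "s = t" using img_eq_iff cedges_sub by blast
qed

lemma card_cedges': "card (cedges K') = card (cedges K)"
  unfolding cedges' using injE by (rule card_image)

lemma count': 
  assumes e: "e \<in> cedges K"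
  shows "card {t'\<in>K'. f ` e \<subseteq> t'} = card {t\<in>K. e \<subseteq> t}"
proof -
  have "{t'\<in>K'. f ` e \<subseteq> t'} = (\<lambda>t. f ` t) ` {t\<in>K. e \<subseteq> t}"
  proof
    show "{t'\<in>K'. f ` e \<subseteq> t'} \<subseteq> (\<lambda>t. f ` t) ` {t\<in>K. e \<subseteq> t}"
    proof
      fix t' assume h: "t' \<in> {t'\<in>K'. f ` e \<subseteq> t'}"
      then have "t' \<in> K'" by simp
      then obtain t where t: "t \<in> K" "t' = f ` t" unfolding K'_def by (elim imageE) (rule that)
      have "f ` e \<subseteq> f ` t" using h t(2) by simp
      then have "e \<subseteq> t" using img_sub_iff cedges_sub[OF e] sub_cv[OF t(1)] by blast
      then have "t \<in> {t\<in>K. e \<subseteq> t}" using t(1) by simp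
      then show "t' \<in> (\<lambda>t. f ` t) ` {t\<in>K. e \<subseteq> t}" using t(2) by (rule rev_image_eqI)
    qed
    show "(\<lambda>t. f ` t) ` {t\<in>K. e \<subseteq> t} \<subseteq> {t'\<in>K'. f ` e \<subseteq> t'}"
    proof
      fix t' assume "t' \<in> (\<lambda>t. f ` t) ` {t\<in>K. e \<subseteq> t}"
      then obtain t where t: "t \<in> {t\<in>K. e \<subseteq> t}" "t' = f ` t" by (elim imageE) (rule that)
      then have "t \<in> K" "e \<subseteq> t" by simp_all
      then have "f ` t \<in> K'" "f ` e \<subseteq> f ` t" unfolding K'_def by auto
      then show "t' \<in> {t'\<in>K'. f ` e \<subseteq> t'}" using t(2) by simp
    qed
  qed
  moreover have "inj_on (\<lambda>t. f ` t) {t\<in>K. e \<subseteq> t}" using injK by (rule inj_on_subset) blast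
  ultimately show ?thesis by (simp add: card_image)
qed

lemma bnd': "boundary_edges K' = (\<lambda>e. f ` e) ` boundary_edges K"
proof
  show "boundary_edges K' \<subseteq> (\<lambda>e. f ` e) ` boundary_edges K"
  proof
    fix e' assume h: "e' \<in> boundary_edges K'"
    then have "e' \<in> cedges K'" unfolding boundary_edges_def by simp
    then obtain e where e: "e \<in> cedges K" "e' = f ` e" unfolding cedges' by (elim imageE) (rule that)
    have "card {t'\<in>K'. e' \<subseteq> t'} = 1" using h unfolding boundary_edges_def by simp
    then have "card {t\<in>K. e \<subseteq> t} = 1" using count'[OF e(1)] e(2) by simp
    then have "e \<in> boundary_edges K" unfolding boundary_edges_def using e(1) by simp
    then show "e' \<in> (\<lambda>e. f ` e) ` boundary_edges K" using e(2) by (rule rev_image_eqI)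
  qed
  show "(\<lambda>e. f ` e) ` boundary_edges K \<subseteq> boundary_edges K'"
  proof
    fix e' assume "e' \<in> (\<lambda>e. f ` e) ` boundary_edges K"
    then obtain e where e: "e \<in> boundary_edges K" "e' = f ` e" by (elim imageE) (rule that)
    then have e1: "e \<in> cedges K" "card {t\<in>K. e \<subseteq> t} = 1" unfolding boundary_edges_def by simp_all
    then have "e' \<in> cedges K'" unfolding cedges' using e(2) by simp
    moreover have "card {t'\<in>K'. e' \<subseteq> t'} = 1" using count'[OF e1(1)] e1(2) e(2) by simp
    ultimately show "e' \<in> boundary_edges K'" unfolding boundary_edges_def by simp
  qed
qed

lemma poly_back:
  assumes "polygon_triangulation K'"
  shows "boundary_edges K \<noteq> {} \<and> euler_char K = 1 \<and> cverts K = \<Union>(boundary_edges K)"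
proof -
  have p: "boundary_edges K' \<noteq> {}" "euler_char K' = 1" "cverts K' = \<Union>(boundary_edges K')"
    using assms unfolding polygon_triangulation_def by simp_all
  have "boundary_edges K \<noteq> {}" using p(1) bnd' by simp
  moreover have "euler_char K' = euler_char K"
    unfolding euler_char_def using cardK' card_cedges' cverts' card_img by simp
  moreover have "cverts K = \<Union>(boundary_edges K)"
  proof -
    have "f ` cverts K = f ` \<Union>(boundary_edges K)"
      using p(3) cverts' bnd' by (simp add: image_Union)
    moreover have "\<Union>(boundary_edges K) \<subseteq> cverts K"
      unfolding boundary_edges_def using cedges_sub by blast
    ultimately show ?thesis using img_eq_iff by blast
  qed
  ultimately show ?thesis using p(2) by simp
qed

end

context mfd
begin

lemma case_tree:
  assumes cc: "complex_connected K" and nch: "\<not> checkered K" and tr: "is_tree K (dual_arcs K)"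
  shows "\<not> checkered (topological_unfolding K (dual_arcs K))"
proof
  define A where "A = dual_arcs K"
  assume ch: "checkered (topological_unfolding K (dual_arcs K))"
  define g where "g v = unfold_vertex A (SOME t. t \<in> K \<and> v \<in> t) v" for v
  have gv: "unfold_vertex A t v = g v" if t: "t \<in> K" "v \<in> t" for t v
  proof -
    have ex: "\<exists>t. t \<in> K \<and> v \<in> t" using t by blast
    define t0 where "t0 = (SOME t. t \<in> K \<and> v \<in> t)"
    have t0: "t0 \<in> K \<and> v \<in> t0" unfolding t0_def using ex by (rule someI_ex)
    have v: "v \<in> cverts K" unfolding cverts_def using t by blast
    have "(t, t0) \<in> (RV A v)\<^sup>*" unfolding A_def using star_conn[OF v t(1) t(2)] t0 by simp
    then have "unfold_vertex A t v = unfold_vertex A t0 v" by (simp add: cls_eq)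
    then show ?thesis unfolding g_def t0_def by simp
  qed
  have ginj: "inj_on g (cverts K)"
  proof (rule inj_onI)
    fix u v assume u: "u \<in> cverts K" and v: "v \<in> cverts K" and e: "g u = g v"
    obtain tu where tu: "tu \<in> K" "u \<in> tu" using u unfolding cverts_def by blast
    obtain tv where tv: "tv \<in> K" "v \<in> tv" using v unfolding cverts_def by blast
    have "unfold_vertex A tu u = unfold_vertex A tv v" using gv[OF tu] gv[OF tv] e by simp
    then show "u = v" by (simp add: cls_eq)
  qed
  interpret R: ren K g by (unfold_locales) (rule ginj)
  have U: "topological_unfolding K A = R.K'"
  proof -
    have "img A t = g ` t" if "t \<in> K" for t
      unfolding img_def using gv that by (meson image_cong)
    then show ?thesis unfolding unfolding_img R.K'_def by (meson image_cong)
  qed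
  have pt: "polygon_triangulation R.K'" using ch U unfolding checkered_def A_def by simp
  have pb: "boundary_edges K \<noteq> {} \<and> euler_char K = 1 \<and> cverts K = \<Union>(boundary_edges K)"
    using R.poly_back[OF pt] .
  have "checkered_coloring (topological_unfolding K A)" using ch unfolding checkered_def A_def by simp
  then have "tree_col K A" using unfold_col[OF tr[folded A_def]] unfolding A_def by simp
  then obtain col where c1: "\<forall>s\<in>K. \<forall>t\<in>K. {s, t} \<in> A \<longrightarrow> col s \<noteq> col t"
    and c2: "\<forall>t\<in>K. col t \<longrightarrow> nb K A t = 3"
    unfolding tree_col_def by (elim exE conjE) (rule that)
  have "checkered_coloring K"
    unfolding checkered_coloring_def
  proof (intro exI conjI ballI impI)
    fix s t assume s: "s \<in> K" and t: "t \<in> K" and h: "s \<noteq> t \<and> card (s \<inter> t) = 2"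
    then have "{s, t} \<in> A" unfolding A_def by (simp add: dual_iff)
    then show "col s \<noteq> col t" using c1 s t by blast
  next
    fix t assume t: "t \<in> K" and h: "col t"
    have "{s\<in>K. s \<noteq> t \<and> card (s \<inter> t) = 2} = {s\<in>K. {s, t} \<in> A}"
      unfolding A_def using t by (auto simp: dual_iff)
    then show "card {s\<in>K. s \<noteq> t \<and> card (s \<inter> t) = 2} = 3" using c2 t h unfolding nb_def by simp
  qed
  moreover have "polygon_triangulation K"
    unfolding polygon_triangulation_def using man cc pb by simp
  ultimately have "checkered K" unfolding checkered_def by simp
  then show False using nch by simp
qed

end


lemma color_sum:
  fixes col :: "'a \<Rightarrow> bool"
  assumes fin: "finite K" and sub: "E \<subseteq> {e. card e = 2 \<and> e \<subseteq> K}"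
    and hprop: "\<forall>s\<in>K. \<forall>t\<in>K. {s, t} \<in> E \<longrightarrow> col s \<noteq> col t"
  shows "(\<Sum>u\<in>{u\<in>K. col u = b}. nb K E u) = card E"
proof -
  define Sig where "Sig = Sigma {u\<in>K. col u = b} (\<lambda>u. {s\<in>K. {s, u} \<in> E})"
  have "card Sig = (\<Sum>u\<in>{u\<in>K. col u = b}. card {s\<in>K. {s, u} \<in> E})"
    unfolding Sig_def using fin by (simp add: card_SigmaI)
  also have "\<dots> = (\<Sum>u\<in>{u\<in>K. col u = b}. nb K E u)" by (simp add: nb_def)
  finally have cS: "card Sig = (\<Sum>u\<in>{u\<in>K. col u = b}. nb K E u)" .
  have inE: "{s, t} \<in> E \<Longrightarrow> s \<in> K \<and> t \<in> K \<and> s \<noteq> t" for s t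
  proof -
    assume "{s, t} \<in> E"
    then have "{s, t} \<in> {e. card e = 2 \<and> e \<subseteq> K}" using sub by (rule subsetD[rotated])
    then have "card {s, t} = 2" "{s, t} \<subseteq> K" by simp_all
    then have "s \<noteq> t" using card_dbl_neq[of s t] by simp
    then show ?thesis using \<open>{s, t} \<subseteq> K\<close> by simp
  qed
  have bij: "bij_betw (\<lambda>(u, s). {s, u}) Sig E"
  proof (rule bij_betwI')
    fix a a' assume a: "a \<in> Sig" and a': "a' \<in> Sig"
    obtain u s where us: "a = (u, s)" by (cases a)
    obtain u' s' where us': "a' = (u', s')" by (cases a')
    have h: "u \<in> K" "col u = b" "s \<in> K" "{s, u} \<in> E" using a us unfolding Sig_def by simp_all
    have h': "u' \<in> K" "col u' = b" "s' \<in> K" "{s', u'} \<in> E" using a' us' unfolding Sig_def by simp_all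
    have cs: "col s \<noteq> b" using hprop h by metis
    show "((\<lambda>(u, s). {s, u}) a = (\<lambda>(u, s). {s, u}) a') = (a = a')"
    proof
      assume "(\<lambda>(u, s). {s, u}) a = (\<lambda>(u, s). {s, u}) a'"
      then have "{s, u} = {s', u'}" using us us' by simp
      then have "(s = s' \<and> u = u') \<or> (s = u' \<and> u = s')" by (meson doubleton_eq_iff)
      moreover have "\<not> (s = u' \<and> u = s')" using cs h'(2) by metis
      ultimately show "a = a'" using us us' by simp
    qed simp
  next
    fix a assume a: "a \<in> Sig"
    obtain u s where us: "a = (u, s)" by (cases a)
    then have "{s, u} \<in> E" using a unfolding Sig_def by simp
    then show "(\<lambda>(u, s). {s, u}) a \<in> E" using us by simp
  next
    fix e assume e: "e \<in> E"
    then have "e \<in> {e. card e = 2 \<and> e \<subseteq> K}" using sub by (rule subsetD[rotated])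
    then have "card e = 2" by simp
    then obtain s t where st: "e = {s, t}" "s \<noteq> t" by (meson card_2_iff)
    then have "{s, t} \<in> E" using e by simp
    then have stK: "s \<in> K" "t \<in> K" using inE by simp_all
    have cst: "col s \<noteq> col t" using hprop stK \<open>{s, t} \<in> E\<close> by metis
    show "\<exists>a\<in>Sig. e = (\<lambda>(u, s). {s, u}) a"
    proof (cases "col t = b")
      case True
      then have "(t, s) \<in> Sig" unfolding Sig_def using stK \<open>{s, t} \<in> E\<close> by simp
      then show ?thesis using st(1) by force
    next
      case False
      then have "col s = b" using cst by (cases "col s"; cases "col t"; cases b) simp_all
      moreover have "{t, s} \<in> E" using \<open>{s, t} \<in> E\<close> by (simp add: insert_commute)
      ultimately have "(s, t) \<in> Sig" unfolding Sig_def using stK by simp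
      moreover have "e = {t, s}" using st(1) by (simp add: insert_commute)
      ultimately show ?thesis by force
    qed
  qed
  then have "card Sig = card E" by (rule bij_betw_same_card)
  then show ?thesis using cS by simp
qed

lemma nb_exch:
  assumes fin: "finite K" and u: "u \<in> K" and eE: "e \<in> E" and fE: "f \<notin> E"
    and e: "e = {e1, e2}" "e1 \<noteq> e2" "e1 \<in> K" "e2 \<in> K"
    and f: "f = {f1, f2}" "f1 \<noteq> f2" "f1 \<in> K" "f2 \<in> K"
  shows "nb K (insert f (E - {e})) u + (if u \<in> e then 1 else 0) = nb K E u + (if u \<in> f then 1 else 0)"
proof -
  define N where "N = {s\<in>K. {s, u} \<in> E}"
  define X where "X = {s\<in>K. {s, u} = e}"
  define Y where "Y = {s\<in>K. {s, u} = f}"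
  have NS: "{s\<in>K. {s, u} \<in> insert f (E - {e})} = (N - X) \<union> Y"
    unfolding N_def X_def Y_def by blast
  have XN: "X \<subseteq> N" unfolding X_def N_def using eE by blast
  have YN: "Y \<inter> N = {}" unfolding Y_def N_def using fE by blast
  have finN: "finite N" unfolding N_def using fin by simp
  have finY: "finite Y" unfolding Y_def using fin by simp
  have cX: "card X = (if u \<in> e then 1 else 0)"
  proof (cases "u \<in> e")
    case True
    then have "u = e1 \<or> u = e2" using e by simp
    then show ?thesis
    proof
      assume "u = e1"
      then have "X = {e2}" unfolding X_def using e by (auto simp: doubleton_eq_iff)
      then show ?thesis using True by simp
    next
      assume "u = e2"
      then have "X = {e1}" unfolding X_def using e by (auto simp: doubleton_eq_iff)
      then show ?thesis using True by simp
    qed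
  next
    case False
    then have "X = {}" unfolding X_def by blast
    then show ?thesis using False by simp
  qed
  have cY: "card Y = (if u \<in> f then 1 else 0)"
  proof (cases "u \<in> f")
    case True
    then have "u = f1 \<or> u = f2" using f by simp
    then show ?thesis
    proof
      assume "u = f1"
      then have "Y = {f2}" unfolding Y_def using f by (auto simp: doubleton_eq_iff)
      then show ?thesis using True by simp
    next
      assume "u = f2"
      then have "Y = {f1}" unfolding Y_def using f by (auto simp: doubleton_eq_iff)
      then show ?thesis using True by simp
    qed
  next
    case False
    then have "Y = {}" unfolding Y_def by blast
    then show ?thesis using False by simp
  qed
  have "(N - X) \<inter> Y = {}" using YN by blast
  moreover have "finite (N - X)" using finN by simp
  ultimately have "card ((N - X) \<union> Y) = card (N - X) + card Y"
    using finY by (simp add: card_Un_disjoint)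
  moreover have "card (N - X) + card X = card N"
    using XN finN by (metis card_Diff_subset card_mono finite_subset le_add_diff_inverse2)
  ultimately have "card ((N - X) \<union> Y) + card X = card N + card Y" by simp
  then show ?thesis unfolding nb_def NS N_def[symmetric] using cX cY by simp
qed

lemma h_const:
  fixes c0 c1 :: "'a \<Rightarrow> bool"
  assumes "(u, v) \<in> (Rel E)\<^sup>*"
    and "\<And>s t. {s, t} \<in> E \<Longrightarrow> c0 s \<noteq> c0 t \<and> c1 s \<noteq> c1 t"
  shows "(c0 u = c1 u) = (c0 v = c1 v)"
  using assms(1)
proof (induction rule: rtrancl_induct)
  case base then show ?case by simp
next
  case (step y z)
  then have "c0 y \<noteq> c0 z" "c1 y \<noteq> c1 z" using assms(2) by auto
  then have "c0 z = (\<not> c0 y)" "c1 z = (\<not> c1 y)" by auto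
  then show ?case using step.IH by simp
qed

context rtree
begin

lemma arc_in: "v \<in> K \<Longrightarrow> v \<noteq> r \<Longrightarrow> {v, p v} \<in> arcs"
  unfolding arcs_def by blast

lemma arc_K: "{s, t} \<in> arcs \<Longrightarrow> s \<in> K \<and> t \<in> K"
proof -
  assume "{s, t} \<in> arcs"
  then have "{s, t} \<in> {e. card e = 2 \<and> e \<subseteq> K}" using arcs_sub by (rule subsetD[rotated])
  then show ?thesis by simp
qed

lemma ex_child: "u \<in> K \<Longrightarrow> u \<noteq> r \<Longrightarrow> \<exists>c. (u, c) \<in> PR\<^sup>* \<and> c \<in> K \<and> c \<noteq> r \<and> p c = r"
proof (induction "d u" arbitrary: u rule: less_induct)
  case less
  show ?case
  proof (cases "p u = r")
    case True then show ?thesis using less by blast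
  next
    case False
    have "p u \<in> K" "d (p u) < d u" using less p_in p_dec by auto
    then obtain c where c: "(p u, c) \<in> PR\<^sup>*" "c \<in> K" "c \<noteq> r" "p c = r" using less.hyps False by blast
    have "(u, p u) \<in> PR" using less by (simp add: PR_iff)
    then have "(u, c) \<in> PR\<^sup>*" using c(1) by (meson converse_rtrancl_into_rtrancl)
    then show ?thesis using c by blast
  qed
qed

lemma exch_tree:
  assumes fin: "finite K" and a: "a \<in> K" "a \<noteq> r" and x: "x \<in> desc a" and y: "y \<in> K" "y \<notin> desc a"
    and xy: "x \<noteq> y" and fn: "{x, y} \<notin> arcs"
  shows "is_tree K (insert {x, y} (arcs - {{a, p a}}))"
proof -
  define S where "S = insert {x, y} (arcs - {{a, p a}})"
  have xK: "x \<in> K" using x unfolding desc_def by simp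
  have sub: "S \<subseteq> {e. card e = 2 \<and> e \<subseteq> K}"
  proof -
    have "card {x, y} = 2" using card_dbl[OF xy] .
    moreover have "{x, y} \<subseteq> K" using xK y by simp
    ultimately show ?thesis unfolding S_def using arcs_sub by blast
  qed
  have mono: "(u, v) \<in> (Rel (arcs - {{a, p a}}))\<^sup>* \<Longrightarrow> (u, v) \<in> (Rel S)\<^sup>*" for u v
    using Rel_mono[of "arcs - {{a, p a}}" S] unfolding S_def by blast
  have xy': "(x, y) \<in> (Rel S)\<^sup>*" unfolding S_def by (simp add: r_into_rtrancl)
  have toR: "(u, r) \<in> (Rel S)\<^sup>*" if u: "u \<in> K" for u
  proof (cases "u \<in> desc a")
    case True
    have "(u, a) \<in> (Rel S)\<^sup>*" using in_desc_conn[OF a True] mono by blast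
    moreover have "(x, a) \<in> (Rel S)\<^sup>*" using in_desc_conn[OF a x] mono by blast
    then have "(a, x) \<in> (Rel S)\<^sup>*" by (rule Rel_rtr_sym)
    moreover have "(y, r) \<in> (Rel S)\<^sup>*" using out_desc_conn[OF a y] mono by blast
    ultimately show ?thesis using xy' by (meson rtrancl_trans)
  next
    case False
    then show ?thesis using out_desc_conn[OF a u False] mono by blast
  qed
  have conn: "graph_connected K S"
    unfolding graph_connected_Rel
  proof (intro ballI)
    fix u v assume "u \<in> K" "v \<in> K"
    then have "(u, r) \<in> (Rel S)\<^sup>*" "(v, r) \<in> (Rel S)\<^sup>*" using toR by auto
    then show "(u, v) \<in> (Rel S)\<^sup>*" by (meson Rel_rtr_sym rtrancl_trans)
  qed
  have finA: "finite arcs" using fin unfolding arcs_def by simp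
  have ein: "{a, p a} \<in> arcs" using arc_in a by simp
  have "card S = card (arcs - {{a, p a}}) + 1"
    unfolding S_def using finA fn by (simp add: card_insert_if)
  also have "\<dots> = card arcs"
  proof -
    have "card arcs > 0" using ein finA card_gt_0_iff by blast
    then show ?thesis using ein finA by (simp add: card_Diff_singleton_if)
  qed
  also have "\<dots> = card K - 1" using card_arcs[OF fin] .
  finally have "card S = card K - 1" .
  then show ?thesis using tree_by_card[OF fin sub conn r_in] unfolding S_def by simp
qed

lemma three_trees:
  assumes fin: "finite K" and x: "x \<in> K" "x \<noteq> r" and fn: "{x, r} \<notin> arcs"
    and nbx: "nb K arcs x \<le> 2" and nby: "nb K arcs r \<le> 2"
    and c: "(x, c) \<in> PR\<^sup>*" "c \<in> K" "c \<noteq> r" "p c = r"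
    and t0: "tree_col K arcs"
    and t1: "tree_col K (insert {x, r} (arcs - {{x, p x}}))"
    and t2: "tree_col K (insert {x, r} (arcs - {{c, p c}}))"
  shows False
proof -
  define w where "w = p x"
  define f where "f = {x, r}"
  define S1 where "S1 = insert f (arcs - {{x, w}})"
  define S2 where "S2 = insert f (arcs - {{c, r}})"
  obtain c0 where P0a: "\<forall>s\<in>K. \<forall>t\<in>K. {s, t} \<in> arcs \<longrightarrow> c0 s \<noteq> c0 t"
    and P0b: "\<forall>t\<in>K. c0 t \<longrightarrow> nb K arcs t = 3"
    using t0 unfolding tree_col_def by (elim exE conjE) (rule that)
  have t1': "tree_col K S1" using t1 unfolding S1_def f_def w_def .
  have t2': "tree_col K S2" using t2 c(4) unfolding S2_def f_def by simp
  obtain c1 where P1a: "\<forall>s\<in>K. \<forall>t\<in>K. {s, t} \<in> S1 \<longrightarrow> c1 s \<noteq> c1 t"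
    and P1b: "\<forall>t\<in>K. c1 t \<longrightarrow> nb K S1 t = 3"
    using t1' unfolding tree_col_def by (elim exE conjE) (rule that)
  obtain c2 where P2a: "\<forall>s\<in>K. \<forall>t\<in>K. {s, t} \<in> S2 \<longrightarrow> c2 s \<noteq> c2 t"
    and P2b: "\<forall>t\<in>K. c2 t \<longrightarrow> nb K S2 t = 3"
    using t2' unfolding tree_col_def by (elim exE conjE) (rule that)
  have rK: "r \<in> K" by (rule r_in)
  have wK: "w \<in> K" unfolding w_def using p_in x by simp
  have wx: "w \<noteq> x" unfolding w_def using p_neq x by simp
  have e1: "{x, w} \<in> arcs" unfolding w_def using arc_in x by simp
  have wr: "w \<noteq> r"
  proof
    assume "w = r" then have "{x, r} \<in> arcs" using e1 by simp
    then show False using fn by simp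
  qed
  have e2: "{c, r} \<in> arcs" using arc_in[of c] c by simp
  have cx: "c \<noteq> x"
  proof
    assume "c = x" then have "w = r" unfolding w_def using c(4) by simp
    then show False using wr by simp
  qed
  have fS1: "{x, r} \<in> S1" unfolding S1_def f_def by simp
  have fS2: "{x, r} \<in> S2" unfolding S2_def f_def by simp
  have xr: "x \<noteq> r" using x by simp
  have c0x: "\<not> c0 x" using P0b x nbx by fastforce
  have c0r: "\<not> c0 r" using P0b rK nby by fastforce
  have c0w: "c0 w" using P0a x wK e1 c0x by metis
  have c0c: "c0 c" using P0a c(2) rK e2 c0r by metis
  have nbw: "nb K arcs w = 3" using P0b wK c0w by simp
  have nbc: "nb K arcs c = 3" using P0b c(2) c0c by simp
  have xdx: "x \<in> desc x" using desc_self x by simp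
  have rdx: "r \<notin> desc x" using root_notin_desc x by simp
  have wdx: "w \<notin> desc x"
  proof
    assume "w \<in> desc x"
    then have "(w, x) \<in> PR\<^sup>*" unfolding desc_def by simp
    then have "w = x \<or> d x < d w" by (rule PR_dec)
    moreover have "d w < d x" unfolding w_def using p_dec x by simp
    ultimately show False using wx by simp
  qed
  have xdc: "x \<in> desc c" unfolding desc_def using x c(1) by simp
  have rdc: "r \<notin> desc c" using root_notin_desc c(3) by simp
  have dsub: "desc x \<subseteq> desc c"
  proof
    fix u assume "u \<in> desc x"
    then have "u \<in> K" "(u, x) \<in> PR\<^sup>*" unfolding desc_def by simp_all
    then show "u \<in> desc c" unfolding desc_def using c(1) by simp
  qed
  have finA: "finite arcs" using fin unfolding arcs_def by simp
  have fnA: "f \<notin> arcs" unfolding f_def using fn .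
  have N1: "nb K S1 u + (if u \<in> {x, w} then 1 else 0) = nb K arcs u + (if u \<in> f then 1 else 0)"
    if "u \<in> K" for u
    unfolding S1_def using nb_exch[OF fin that e1 fnA _ wx[symmetric] x(1) wK f_def xr x(1) rK] by simp
  have N2: "nb K S2 u + (if u \<in> {c, r} then 1 else 0) = nb K arcs u + (if u \<in> f then 1 else 0)"
    if "u \<in> K" for u
    unfolding S2_def using nb_exch[OF fin that e2 fnA _ c(3) c(2) rK f_def xr x(1) rK] by simp
  have E1: "{s, t} \<in> arcs - {{x, p x}} \<Longrightarrow> c0 s \<noteq> c0 t \<and> c1 s \<noteq> c1 t" for s t
  proof -
    assume h: "{s, t} \<in> arcs - {{x, p x}}"
    then have st: "s \<in> K" "t \<in> K" using arc_K by auto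
    have "{s, t} \<in> S1" using h unfolding S1_def w_def by simp
    then show ?thesis using P0a P1a st h by blast
  qed
  have H1out: "(c0 u = c1 u) = (c0 r = c1 r)" if "u \<in> K" "u \<notin> desc x" for u
    by (rule h_const[OF out_desc_conn[OF x that] E1])
  have "c1 x \<noteq> c1 r" using P1a x(1) rK fS1 by blast
  have nbw1: "nb K S1 w = 2" using N1[OF wK] nbw wx wr unfolding f_def by simp
  have c1w: "\<not> c1 w" using P1b wK nbw1 by fastforce
  have H1r: "\<not> (c0 r = c1 r)" using H1out[OF wK wdx] c0w c1w by simp
  have A: "nb K arcs u = 3" if u: "u \<in> K" "u \<notin> desc x" "u \<noteq> r" "\<not> c0 u" for u
  proof -
    have "c1 u" using H1out[OF u(1,2)] H1r u(4) by simp
    then have "nb K S1 u = 3" using P1b u(1) by simp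
    moreover have "u \<noteq> x" using u(2) xdx by blast
    moreover have "u \<noteq> w" using u(4) c0w by blast
    ultimately show ?thesis using N1[OF u(1)] u(3) unfolding f_def by simp
  qed
  have A': "nb K arcs r = 2"
  proof -
    have "c1 r" using H1r c0r by simp
    then have "nb K S1 r = 3" using P1b rK by simp
    then show ?thesis using N1[OF rK] xr wr unfolding f_def by simp
  qed
  have E2: "{s, t} \<in> arcs - {{c, p c}} \<Longrightarrow> c0 s \<noteq> c0 t \<and> c2 s \<noteq> c2 t" for s t
  proof -
    assume h: "{s, t} \<in> arcs - {{c, p c}}"
    then have st: "s \<in> K" "t \<in> K" using arc_K by auto
    have "{s, t} \<in> S2" using h c(4) unfolding S2_def by simp
    then show ?thesis using P0a P2a st h by blast
  qed
  have H2in: "(c0 u = c2 u) = (c0 c = c2 c)" if "u \<in> desc c" for u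
    by (rule h_const[OF in_desc_conn[OF c(2,3) that] E2])
  have nbc2: "nb K S2 c = 2" using N2[OF c(2)] nbc cx c(3) unfolding f_def by simp
  have c2c: "\<not> c2 c" using P2b c(2) nbc2 by fastforce
  have H2c: "\<not> (c0 c = c2 c)" using c0c c2c by simp
  have B: "nb K arcs u = 3" if u: "u \<in> desc c" "u \<noteq> x" "\<not> c0 u" for u
  proof -
    have uK: "u \<in> K" using u(1) unfolding desc_def by simp
    have "c2 u" using H2in[OF u(1)] H2c u(3) by simp
    then have "nb K S2 u = 3" using P2b uK by simp
    moreover have "u \<noteq> c" using u(3) c0c by blast
    moreover have "u \<noteq> r" using u(1) rdc by blast
    ultimately show ?thesis using N2[OF uK] u(2) unfolding f_def by simp
  qed
  have B': "nb K arcs x = 2"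
  proof -
    have "c2 x" using H2in[OF xdc] H2c c0x by simp
    then have "nb K S2 x = 3" using P2b x(1) by simp
    then show ?thesis using N2[OF x(1)] cx xr unfolding f_def by simp
  qed
  have all3: "nb K arcs u = 3" if u: "u \<in> K" "\<not> c0 u" "u \<noteq> x" "u \<noteq> r" for u
  proof (cases "u \<in> desc c")
    case True then show ?thesis using B u by simp
  next
    case False
    then have "u \<notin> desc x" using dsub by blast
    then show ?thesis using A u by simp
  qed
  have prop0: "\<forall>s\<in>K. \<forall>t\<in>K. {s, t} \<in> arcs \<longrightarrow> c0 s \<noteq> c0 t" by (rule P0a)
  have sW: "(\<Sum>u\<in>{u\<in>K. c0 u = True}. nb K arcs u) = card arcs"
    by (rule color_sum[OF fin arcs_sub prop0])
  have sB: "(\<Sum>u\<in>{u\<in>K. c0 u = False}. nb K arcs u) = card arcs"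
    by (rule color_sum[OF fin arcs_sub prop0])
  have "(\<Sum>u\<in>{u\<in>K. c0 u = True}. nb K arcs u) = (\<Sum>u\<in>{u\<in>K. c0 u = True}. 3)"
    using P0b by (intro sum.cong) auto
  then have cW: "card arcs = 3 * card {u\<in>K. c0 u = True}" using sW by simp
  define B0 where "B0 = {u\<in>K. c0 u = False} - {x, r}"
  have finB0: "finite B0" unfolding B0_def using fin by simp
  have Bdec: "{u\<in>K. c0 u = False} = insert x (insert r B0)"
    unfolding B0_def using x(1) rK c0x c0r by blast
  have "(\<Sum>u\<in>{u\<in>K. c0 u = False}. nb K arcs u) = nb K arcs x + (nb K arcs r + (\<Sum>u\<in>B0. nb K arcs u))"
    unfolding Bdec using finB0 xr unfolding B0_def by (simp add: sum.insert_if)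
  also have "(\<Sum>u\<in>B0. nb K arcs u) = (\<Sum>u\<in>B0. 3)"
    using all3 unfolding B0_def by (intro sum.cong) auto
  finally have "card arcs = 4 + 3 * card B0" using sB A' B' by simp
  then show False using cW by presburger
qed

end


context mfd
begin

lemma nb_le2:
  assumes u: "u \<in> K" and f: "{u, v} \<in> dual_arcs K" and sub: "E \<subseteq> dual_arcs K - {{u, v}}"
  shows "nb K E u \<le> 2"
proof -
  have vK: "v \<in> K" using f by (simp add: dual_iff)
  have vu: "{v, u} \<in> dual_arcs K" using f by (simp add: insert_commute)
  have "{s\<in>K. {s, u} \<in> E} \<subseteq> {s\<in>K. {s, u} \<in> dual_arcs K} - {v}"
  proof
    fix s assume s: "s \<in> {s\<in>K. {s, u} \<in> E}"
    then have "{s, u} \<in> dual_arcs K - {{u, v}}" using sub by blast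
    then have h: "{s, u} \<in> dual_arcs K" "{s, u} \<noteq> {u, v}" by simp_all
    have "s \<noteq> v"
    proof
      assume "s = v"
      then have "{s, u} = {u, v}" by (simp add: insert_commute)
      then show False using h(2) by simp
    qed
    then show "s \<in> {s\<in>K. {s, u} \<in> dual_arcs K} - {v}" using s h(1) by simp
  qed
  moreover have "finite {s\<in>K. {s, u} \<in> dual_arcs K}" using fin by simp
  ultimately have "card {s\<in>K. {s, u} \<in> E} \<le> card ({s\<in>K. {s, u} \<in> dual_arcs K} - {v})"
    by (meson card_mono finite_Diff)
  also have "\<dots> = card {s\<in>K. {s, u} \<in> dual_arcs K} - 1"
    using vK vu by (simp add: card_Diff_singleton_if)
  also have "\<dots> \<le> 2" using nb_dual_le3[OF u] unfolding nb_def by simp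
  finally show ?thesis unfolding nb_def .
qed

lemma case_cycle:
  assumes cc: "complex_connected K" and nt: "\<not> is_tree K (dual_arcs K)"
  shows "\<exists>T. T \<subseteq> dual_arcs K \<and> is_tree K T \<and> \<not> tree_col K T"
proof -
  define A where "A = dual_arcs K"
  have Asub: "A \<subseteq> {e. card e = 2 \<and> e \<subseteq> K}" unfolding A_def by (rule dual_sub)
  have Aconn: "graph_connected K A" unfolding A_def using dual_conn[OF cc] .
  have "\<exists>f\<in>A. graph_connected K (A - {f})"
    using nt Asub Aconn unfolding is_tree_def A_def by blast
  then obtain f where fA: "f \<in> A" and fc: "graph_connected K (A - {f})" by (elim bexE) (rule that)
  have "\<exists>x y. f = {x, y} \<and> x \<in> K \<and> y \<in> K \<and> x \<noteq> y \<and> card (x \<inter> y) = 2"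
    using fA unfolding A_def by (rule dual_elem)
  then obtain x y where xy: "f = {x, y}" "x \<in> K" "y \<in> K" "x \<noteq> y"
    by (elim exE conjE) (rule that)
  have S0sub: "A - {f} \<subseteq> {e. card e = 2 \<and> e \<subseteq> K}" using Asub by blast
  obtain p d where rt: "rtree K y p d" and asub: "rtree.arcs K y p \<subseteq> A - {f}"
    using bfs_tree[OF S0sub fc xy(3)] by (elim exE conjE) (rule that)
  interpret R: rtree K y p d by (rule rt)
  have finK: "finite K" by (rule fin)
  have fn: "{x, y} \<notin> R.arcs" using asub xy(1) by blast
  have fA': "{x, y} \<in> A" using fA xy(1) by simp
  have nbx: "nb K R.arcs x \<le> 2"
    using nb_le2[OF xy(2), of y R.arcs] fA' asub xy(1) unfolding A_def by simp
  have fA'': "{y, x} \<in> A" using fA' by (simp add: insert_commute)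
  have "f = {y, x}" using xy(1) by (simp add: insert_commute)
  then have nby: "nb K R.arcs y \<le> 2"
    using nb_le2[OF xy(3), of x R.arcs] fA'' asub unfolding A_def by simp
  have xr: "x \<noteq> y" by (rule xy(4))
  obtain c where c: "(x, c) \<in> R.PR\<^sup>*" "c \<in> K" "c \<noteq> y" "p c = y"
    using R.ex_child[OF xy(2) xr] by (elim exE conjE) (rule that)
  define S1 where "S1 = insert {x, y} (R.arcs - {{x, p x}})"
  define S2 where "S2 = insert {x, y} (R.arcs - {{c, p c}})"
  have T0t: "is_tree K R.arcs" by (rule R.arcs_tree)
  have xdx: "x \<in> R.desc x" using R.desc_self xy(2) by simp
  have ydx: "y \<notin> R.desc x" using R.root_notin_desc xr by simp
  have xdc: "x \<in> R.desc c" unfolding R.desc_def using xy(2) c(1) by simp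
  have ydc: "y \<notin> R.desc c" using R.root_notin_desc c(3) by simp
  have S1t: "is_tree K S1" unfolding S1_def
    by (rule R.exch_tree[OF finK xy(2) xr xdx xy(3) ydx xr fn])
  have S2t: "is_tree K S2" unfolding S2_def
    by (rule R.exch_tree[OF finK c(2) c(3) xdc xy(3) ydc xr fn])
  have T0A: "R.arcs \<subseteq> A" using asub by blast
  have S1A: "S1 \<subseteq> A" unfolding S1_def using T0A fA' by blast
  have S2A: "S2 \<subseteq> A" unfolding S2_def using T0A fA' by blast
  have "\<not> tree_col K R.arcs \<or> \<not> tree_col K S1 \<or> \<not> tree_col K S2"
  proof (rule ccontr)
    assume "\<not> (\<not> tree_col K R.arcs \<or> \<not> tree_col K S1 \<or> \<not> tree_col K S2)"
    then have t: "tree_col K R.arcs" "tree_col K S1" "tree_col K S2" by simp_all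
    show False
      using R.three_trees[OF finK xy(2) xr fn nbx nby c t(1)] t(2,3) unfolding S1_def S2_def by simp
  qed
  then show ?thesis using T0t S1t S2t T0A S1A S2A unfolding A_def by blast
qed

end

theorem mainTheorem8:
  fixes M :: "'v set set"
  assumes "simplicial_2_manifold M"
      and "complex_connected M"
      and "\<not> checkered M"
  shows "\<exists>T. spanning_tree_dual M T \<and> \<not> checkered (topological_unfolding M T)"
proof -
  interpret mfd M by (unfold_locales) (rule assms(1))
  show ?thesis
  proof (cases "is_tree M (dual_arcs M)")
    case True
    have "spanning_tree_dual M (dual_arcs M)" unfolding spanning_tree_dual_def using True by simp
    moreover have "\<not> checkered (topological_unfolding M (dual_arcs M))"
      by (rule case_tree[OF assms(2) assms(3) True])
    ultimately show ?thesis by blast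
  next
    case False
    obtain T where T: "T \<subseteq> dual_arcs M" "is_tree M T" "\<not> tree_col M T"
      using case_cycle[OF assms(2) False] by (elim exE conjE) (rule that)
    have "spanning_tree_dual M T" unfolding spanning_tree_dual_def using T by simp
    moreover have "\<not> checkered (topological_unfolding M T)"
    proof
      assume "checkered (topological_unfolding M T)"
      then have "checkered_coloring (topological_unfolding M T)" unfolding checkered_def by simp
      then have "tree_col M T" using unfold_col[OF T(2) T(1)] by simp
      then show False using T(3) by simp
    qed
    ultimately show ?thesis by blast
  qed
qed


end
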